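(* As formal power series in $q$, $$\gamma^6 = 59049 \xi^{10} - 262440 \xi^{11} + 466560 \xi^{12} - 414720 \xi^{13} + 184320 \xi^{14} - 32768 \xi^{15}.$$
   Context: Let $E(q)=\prod_{m\ge1}(1-q^m)$. Define $$\gamma=\gamma(q)=\frac{E(q)^5E(q^2)^5E(q^6)^5}{E(q^3)^{15}},\qquad \xi=\xi(q)=\frac{E(q^2)^5E(q^6)}{E(q)E(q^3)^5}.$$ *)

theory Defs
  imports "HOL-Computational_Algebra.Formal_Power_Series"
begin

text \<open>The Euler product E(q) = prod_{m>=1} (1 - q^m) as a formal power series:
  its n-th coefficient is the n-th coefficient of the finite product over m = 1..n
  (factors with m > n do not affect coefficients of degree at most n).\<close>
definition euler_E :: "rat fps" where
  "euler_E = Abs_fps (\<lambda>n. fps_nth (\<Prod>m\<in>{1..n}. (1 - fps_X ^ m)) n)"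

definition euler_Ek :: "nat \<Rightarrow> rat fps" where
  "euler_Ek k = fps_compose euler_E (fps_X ^ k)"

definition gamma_fps :: "rat fps" where
  "gamma_fps = euler_Ek 1 ^ 5 * euler_Ek 2 ^ 5 * euler_Ek 6 ^ 5 / euler_Ek 3 ^ 15"

definition xi_fps :: "rat fps" where
  "xi_fps = euler_Ek 2 ^ 5 * euler_Ek 6 / (euler_Ek 1 * euler_Ek 3 ^ 5)"

end

theory Submission
  imports Defs "HOL-Computational_Algebra.Formal_Laurent_Series"
begin

unbundle fps_syntax

definition eqm :: "nat \<Rightarrow> 'a::comm_ring_1 fps \<Rightarrow> 'a fps \<Rightarrow> bool" where
  "eqm n f g \<longleftrightarrow> fps_X ^ n dvd (f - g)"

lemma eqm_iff: "eqm n f g \<longleftrightarrow> (\<forall>i<n. f $ i = g $ i)"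
proof
  assume "eqm n f g"
  then obtain h where h: "f - g = fps_X ^ n * h" unfolding eqm_def by (elim dvdE)
  show "\<forall>i<n. f $ i = g $ i"
  proof (intro allI impI)
    fix i assume "i < n"
    have "(f - g) $ i = 0" unfolding h using \<open>i < n\<close> by (simp add: fps_X_power_mult_nth)
    then show "f $ i = g $ i" by simp
  qed
next
  assume H: "\<forall>i<n. f $ i = g $ i"
  have "f - g = fps_X ^ n * fps_shift n (f - g)"
    using H by (auto simp: fps_eq_iff fps_X_power_mult_nth)
  then show "eqm n f g" unfolding eqm_def by (metis dvd_triv_left)
qed

lemma eqm_refl[simp]: "eqm n f f" by (simp add: eqm_iff)
lemma eqm_sym: "eqm n f g \<Longrightarrow> eqm n g f" by (simp add: eqm_iff)
lemma eqm_trans: "eqm n f g \<Longrightarrow> eqm n g h \<Longrightarrow> eqm n f h" by (simp add: eqm_iff)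
lemma eqm_mono: "eqm n f g \<Longrightarrow> m \<le> n \<Longrightarrow> eqm m f g" by (simp add: eqm_iff)
lemma eqm_0[simp]: "eqm 0 f g" by (simp add: eqm_iff)

lemma eqm_add: "eqm n f g \<Longrightarrow> eqm n f' g' \<Longrightarrow> eqm n (f + f') (g + g')"
  by (simp add: eqm_iff)
lemma eqm_diff: "eqm n f g \<Longrightarrow> eqm n f' g' \<Longrightarrow> eqm n (f - f') (g - g')"
  by (simp add: eqm_iff)
lemma eqm_uminus: "eqm n f g \<Longrightarrow> eqm n (- f) (- g)"
  by (simp add: eqm_iff)

lemma eqm_mult: "eqm n f g \<Longrightarrow> eqm n f' g' \<Longrightarrow> eqm n (f * f') (g * g')"
proof -
  assume a: "eqm n f g" and b: "eqm n f' g'"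
  have "f * f' - g * g' = f * (f' - g') + (f - g) * g'" by (simp add: algebra_simps)
  moreover have "fps_X ^ n dvd f * (f' - g')" using b unfolding eqm_def by simp
  moreover have "fps_X ^ n dvd (f - g) * g'" using a unfolding eqm_def by simp
  ultimately show ?thesis unfolding eqm_def by simp
qed

lemma eqm_mult_left: "eqm n f g \<Longrightarrow> eqm n (h * f) (h * g)"
  by (simp add: eqm_mult)
lemma eqm_mult_right: "eqm n f g \<Longrightarrow> eqm n (f * h) (g * h)"
  by (simp add: eqm_mult)

lemma eqm_power: "eqm n f g \<Longrightarrow> eqm n (f ^ k) (g ^ k)"
  by (induction k) (simp_all add: eqm_mult)

lemma eqm_sum: "(\<And>i. i \<in> S \<Longrightarrow> eqm n (f i) (g i)) \<Longrightarrow> eqm n (sum f S) (sum g S)"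
  by (induction S rule: infinite_finite_induct) (simp_all add: eqm_add)

lemma eqm_prod: "(\<And>i. i \<in> S \<Longrightarrow> eqm n (f i) (g i)) \<Longrightarrow> eqm n (prod f S) (prod g S)"
  by (induction S rule: infinite_finite_induct) (simp_all add: eqm_mult)

lemma eqm_X_power: "m \<ge> n \<Longrightarrow> eqm n (fps_X ^ m * f) 0"
  by (simp add: eqm_iff fps_X_power_mult_nth)

lemma fps_eq_eqm: "(\<And>n. eqm n f g) \<Longrightarrow> f = g"
  by (auto simp: eqm_iff fps_eq_iff)

lemma eqm_inverse:
  fixes f g :: "'a::field fps"
  assumes "f $ 0 \<noteq> 0" "eqm n f g"
  shows "eqm n (inverse f) (inverse g)"
proof (cases "n = 0")
  case True then show ?thesis by simp
next
  case False
  then have g0: "g $ 0 = f $ 0" using assms(2) by (simp add: eqm_iff)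
  have "inverse f - inverse g = inverse f * inverse g * (g - f)"
    using assms(1) g0
    by (simp add: algebra_simps inverse_mult_eq_1 inverse_mult_eq_1' mult.assoc[symmetric])
  moreover have "fps_X ^ n dvd (g - f)" using assms(2) eqm_sym unfolding eqm_def by blast
  ultimately show ?thesis unfolding eqm_def by simp
qed

definition good :: "(nat \<Rightarrow> 'a::comm_ring_1 fps) \<Rightarrow> bool" where
  "good f \<longleftrightarrow> (\<forall>k. eqm (Suc k) (f k) 1)"

definition iprod :: "(nat \<Rightarrow> 'a::comm_ring_1 fps) \<Rightarrow> 'a fps" where
  "iprod f = Abs_fps (\<lambda>n. (\<Prod>k<Suc n. f k) $ n)"

lemma prod_tail_eqm:
  assumes "good f" "m \<le> N"
  shows "eqm m (\<Prod>k<N. f k) (\<Prod>k<m. f k)"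
proof -
  have split: "(\<Prod>k<N. f k) = (\<Prod>k<m. f k) * (\<Prod>k\<in>{m..<N}. f k)"
    using assms(2) by (metis prod.atLeastLessThan_concat lessThan_atLeast0 zero_le)
  have "eqm m (\<Prod>k\<in>{m..<N}. f k) (\<Prod>k\<in>{m..<N}. 1)"
  proof (rule eqm_prod)
    fix k assume "k \<in> {m..<N}"
    then have "m \<le> Suc k" by simp
    then show "eqm m (f k) 1" using assms(1) unfolding good_def by (meson eqm_mono)
  qed
  then have "eqm m (\<Prod>k<N. f k) ((\<Prod>k<m. f k) * 1)"
    unfolding split by (intro eqm_mult) simp_all
  then show ?thesis by simp
qed

lemma iprod_eqm:
  assumes "good f" "n \<le> N"
  shows "eqm n (iprod f) (\<Prod>k<N. f k)"
  unfolding eqm_iff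
proof (intro allI impI)
  fix i assume "i < n"
  have "eqm (Suc i) (\<Prod>k<N. f k) (\<Prod>k<Suc i. f k)"
    using assms \<open>i < n\<close> by (intro prod_tail_eqm) auto
  then have "(\<Prod>k<N. f k) $ i = (\<Prod>k<Suc i. f k) $ i" by (simp add: eqm_iff)
  then show "iprod f $ i = (\<Prod>k<N. f k) $ i" by (simp add: iprod_def)
qed

lemma iprod_unique:
  assumes "good f" "\<And>n. \<exists>N\<ge>n. eqm n F (\<Prod>k<N. f k)"
  shows "iprod f = F"
proof (rule fps_eq_eqm)
  fix n
  obtain N where "N \<ge> n" "eqm n F (\<Prod>k<N. f k)" using assms(2) by blast
  then show "eqm n (iprod f) F" using iprod_eqm[OF assms(1)] by (meson eqm_sym eqm_trans)
qed

lemma good_mult: "good f \<Longrightarrow> good g \<Longrightarrow> good (\<lambda>k. f k * g k)"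
  unfolding good_def using eqm_mult by fastforce

lemma iprod_mult:
  assumes "good f" "good g"
  shows "iprod (\<lambda>k. f k * g k) = iprod f * iprod g"
proof (rule iprod_unique[OF good_mult[OF assms]])
  fix n
  have "eqm n (iprod f * iprod g) ((\<Prod>k<n. f k) * (\<Prod>k<n. g k))"
    by (intro eqm_mult iprod_eqm assms) auto
  then show "\<exists>N\<ge>n. eqm n (iprod f * iprod g) (\<Prod>k<N. f k * g k)"
    by (auto simp: prod.distrib)
qed

lemma good_power: "good f \<Longrightarrow> good (\<lambda>k. f k ^ m)"
  unfolding good_def using eqm_power by fastforce

lemma iprod_power:
  assumes "good f"
  shows "iprod (\<lambda>k. f k ^ m) = iprod f ^ m"
proof (rule iprod_unique[OF good_power[OF assms]])
  fix n
  have "eqm n (iprod f ^ m) ((\<Prod>k<n. f k) ^ m)"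
    by (intro eqm_power iprod_eqm assms) auto
  then show "\<exists>N\<ge>n. eqm n (iprod f ^ m) (\<Prod>k<N. f k ^ m)"
    by (auto simp: prod_power_distrib)
qed

lemma good_sub:
  assumes "good f" "\<And>k. g k \<ge> k"
  shows "good (\<lambda>k. f (g k))"
  unfolding good_def
proof
  fix k
  have "eqm (Suc (g k)) (f (g k)) 1" using assms(1) unfolding good_def by blast
  then show "eqm (Suc k) (f (g k)) 1" using assms(2)[of k] by (meson Suc_le_mono eqm_mono)
qed

lemma prod_split_mod:
  fixes f :: "nat \<Rightarrow> 'a::comm_monoid_mult"
  shows "(\<Prod>k<t*N. f k) = (\<Prod>r<t. \<Prod>k<N. f (t*k + r))"
proof (induction N)
  case 0 then show ?case by simp
next
  case (Suc N)
  have e: "t * Suc N = t*N + t" by simp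
  have "(\<Prod>k<t*Suc N. f k) = (\<Prod>k\<in>{0..<t*N}. f k) * (\<Prod>k\<in>{t*N..<t*N+t}. f k)"
    unfolding e lessThan_atLeast0 by (rule prod.atLeastLessThan_concat[symmetric]) simp_all
  also have "(\<Prod>k\<in>{t*N..<t*N+t}. f k) = (\<Prod>r<t. f (t*N + r))"
  proof -
    have "(\<Prod>k\<in>{0+t*N..<t+t*N}. f k) = (\<Prod>r\<in>{0..<t}. f (r + t*N))"
      by (rule prod.shift_bounds_nat_ivl)
    then show ?thesis by (simp add: lessThan_atLeast0 add.commute)
  qed
  finally show ?case using Suc by (simp add: prod.distrib lessThan_atLeast0)
qed

lemma iprod_split:
  assumes "good f" "t > 0"
  shows "iprod f = (\<Prod>r<t. iprod (\<lambda>k. f (t*k + r)))"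
proof -
  have tk: "k \<le> t*k + r" for k r using assms(2) by (simp add: trans_le_add1)
  have g: "good (\<lambda>k. f (t*k + r))" for r
    by (rule good_sub[OF assms(1)]) (rule tk)
  show ?thesis
  proof (rule sym, rule fps_eq_eqm)
    fix n
    have "eqm n (\<Prod>r<t. iprod (\<lambda>k. f (t*k + r))) (\<Prod>r<t. \<Prod>k<n. f (t*k + r))"
    proof (rule eqm_prod)
      fix r show "eqm n (iprod (\<lambda>k. f (t*k + r))) (\<Prod>k<n. f (t*k + r))"
        by (rule iprod_eqm[OF g]) simp
    qed
    also have "(\<Prod>r<t. \<Prod>k<n. f (t*k + r)) = (\<Prod>k<t*n. f k)"
      by (rule prod_split_mod[symmetric])
    finally have 1: "eqm n (\<Prod>r<t. iprod (\<lambda>k. f (t*k + r))) (\<Prod>k<t*n. f k)" .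
    have "n \<le> t * n" using assms(2) by simp
    then have 2: "eqm n (iprod f) (\<Prod>k<t*n. f k)"
      by (rule iprod_eqm[OF assms(1)])
    show "eqm n (\<Prod>r<t. iprod (\<lambda>k. f (t*k + r))) (iprod f)"
      using 1 2 by (meson eqm_sym eqm_trans)
  qed
qed

lemma eqm_one_plus: "m \<ge> n \<Longrightarrow> eqm n (1 + c * fps_X ^ m) 1"
  by (simp add: eqm_iff fps_X_power_mult_right_nth)

lemma eqm_one_minus: "m \<ge> n \<Longrightarrow> eqm n (1 - c * fps_X ^ m) 1"
  by (simp add: eqm_iff fps_X_power_mult_right_nth)

lemma good_monom: "(\<And>k. d k \<ge> Suc k) \<Longrightarrow> good (\<lambda>k. 1 + c k * fps_X ^ (d k))"
  unfolding good_def by (simp add: eqm_one_plus)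

lemma good_monom': "(\<And>k. d k \<ge> Suc k) \<Longrightarrow> good (\<lambda>k. 1 - c k * fps_X ^ (d k))"
  unfolding good_def by (simp add: eqm_one_minus)

lemma good_monom1: "(\<And>k. d k \<ge> Suc k) \<Longrightarrow> good (\<lambda>k. 1 - fps_X ^ (d k))"
  using good_monom'[of d "\<lambda>_. 1"] by simp

lemma eqm_compose:
  fixes f g :: "'a::idom fps"
  assumes "eqm n f g" "k \<ge> 1"
  shows "eqm n (f oo fps_X ^ k) (g oo fps_X ^ k)"
proof -
  have x0: "(fps_X ^ k :: 'a fps) $ 0 = 0" using assms(2) by simp
  obtain h where h: "f - g = fps_X ^ n * h" using assms(1) unfolding eqm_def by (elim dvdE)
  have "(f oo fps_X ^ k) - (g oo fps_X ^ k) = (f - g) oo fps_X ^ k"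
    by (simp add: fps_compose_sub_distrib)
  also have "\<dots> = (fps_X ^ n oo fps_X ^ k) * (h oo fps_X ^ k)"
    unfolding h by (simp add: fps_compose_mult_distrib[OF x0])
  also have "(fps_X ^ n :: 'a fps) oo fps_X ^ k = (fps_X ^ k) ^ n"
    by (rule fps_X_power_compose[OF x0])
  also have "\<dots> = (fps_X ^ n :: 'a fps) * fps_X ^ ((k - 1) * n)"
  proof -
    have "k * n = n + (k - 1) * n" using assms(2) by (cases k) auto
    then show ?thesis by (simp add: power_mult[symmetric] power_add[symmetric])
  qed
  finally show ?thesis unfolding eqm_def by (simp add: mult.assoc)
qed

lemma good_compose:
  fixes f :: "nat \<Rightarrow> 'a::idom fps"
  shows "good f \<Longrightarrow> k \<ge> 1 \<Longrightarrow> good (\<lambda>i. f i oo fps_X ^ k)"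
  unfolding good_def using eqm_compose[where g=1] by fastforce

lemma iprod_compose:
  fixes f :: "nat \<Rightarrow> 'a::idom fps"
  assumes "good f" "k \<ge> 1"
  shows "iprod f oo fps_X ^ k = iprod (\<lambda>i. f i oo fps_X ^ k)"
proof (rule sym, rule iprod_unique[OF good_compose[OF assms]])
  fix n
  have "eqm n (iprod f oo fps_X ^ k) ((\<Prod>i<n. f i) oo fps_X ^ k)"
    by (rule eqm_compose[OF iprod_eqm[OF assms(1)] assms(2)]) simp
  also have "(\<Prod>i<n. f i) oo fps_X ^ k = (\<Prod>i<n. f i oo fps_X ^ k)"
    using assms(2) by (simp add: fps_compose_prod_distrib)
  finally show "\<exists>N\<ge>n. eqm n (iprod f oo fps_X ^ k) (\<Prod>i<N. f i oo fps_X ^ k)" by blast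
qed

lemma euler_E_iprod: "euler_E = iprod (\<lambda>k. 1 - fps_X ^ Suc k)"
proof (rule fps_ext)
  fix n
  have g: "good (\<lambda>k. 1 - fps_X ^ Suc k :: rat fps)" by (rule good_monom1) simp
  have "eqm (Suc n) (iprod (\<lambda>k. 1 - fps_X ^ Suc k :: rat fps)) (\<Prod>k<Suc n. 1 - fps_X ^ Suc k)"
    by (rule iprod_eqm[OF g]) simp
  also have "(\<Prod>k<Suc n. 1 - fps_X ^ Suc k :: rat fps) = (\<Prod>k<n. 1 - fps_X ^ Suc k) * (1 - fps_X ^ Suc n)"
    by simp
  finally have 1: "eqm (Suc n) (iprod (\<lambda>k. 1 - fps_X ^ Suc k :: rat fps)) ((\<Prod>k<n. 1 - fps_X ^ Suc k :: rat fps) * 1)"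
    using eqm_mult_left[OF eqm_one_minus[of "Suc n" "Suc n" 1]] eqm_trans by fastforce
  have 2: "(\<Prod>k<n. 1 - fps_X ^ Suc k :: rat fps) = (\<Prod>m\<in>{1..n}. 1 - fps_X ^ m)"
    by (simp add: prod.atLeast1_atMost_eq)
  show "euler_E $ n = iprod (\<lambda>k. 1 - fps_X ^ Suc k) $ n"
    using 1 unfolding 2 by (simp add: euler_E_def eqm_iff)
qed

lemma euler_Ek_iprod:
  assumes "k \<ge> 1"
  shows "euler_Ek k = iprod (\<lambda>i. 1 - fps_X ^ (k * Suc i))"
proof -
  have g: "good (\<lambda>k. 1 - fps_X ^ Suc k :: rat fps)" by (rule good_monom1) simp
  have x0: "(fps_X ^ k :: rat fps) $ 0 = 0" using assms by simp
  have "euler_Ek k = iprod (\<lambda>i. (1 - fps_X ^ Suc i) oo fps_X ^ k)"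
    unfolding euler_Ek_def euler_E_iprod by (rule iprod_compose[OF g assms])
  also have "(\<lambda>i. (1 - fps_X ^ Suc i :: rat fps) oo fps_X ^ k) = (\<lambda>i. 1 - fps_X ^ (k * Suc i))"
    by (simp add: fps_compose_sub_distrib fps_X_power_compose[OF x0] power_mult[symmetric] mult.commute del: power_Suc)
  finally show ?thesis .
qed

definition tri :: "int \<Rightarrow> nat" where "tri j = nat ((j * j + j) div 2)"

lemma tri_even: "even (j * j + j :: int)"
  by (metis even_add even_mult_iff)

lemma tri_int: "2 * int (tri j) = j * j + j"
proof -
  have "j * j + j \<ge> 0"
  proof (cases "j \<ge> 0")
    case True then show ?thesis by simp
  next
    case False
    then have "j * (j + 1) \<ge> 0" by (intro mult_nonpos_nonpos) auto
    then show ?thesis by (simp add: algebra_simps)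
  qed
  then show ?thesis unfolding tri_def using tri_even[of j] by simp
qed

lemma tri_Suc: "int (tri (j + 1)) = int (tri j) + j + 1"
  using tri_int[of j] tri_int[of "j+1"] by (simp add: algebra_simps)

lemma tri_neg: "int (tri (- j)) = int (tri j) - j"
  using tri_int[of j] tri_int[of "-j"] by (simp add: algebra_simps)

lemma tri_sq: "int (tri j) + int (tri (- j)) = j * j"
  using tri_int[of j] tri_int[of "-j"] by (simp add: algebra_simps)

fun gb :: "'a::comm_ring_1 \<Rightarrow> nat \<Rightarrow> nat \<Rightarrow> 'a" where
  "gb Q 0 k = (if k = 0 then 1 else 0)"
| "gb Q (Suc m) k = (if k = 0 then 1 else gb Q m (k - 1) + Q ^ k * gb Q m k)"

lemma gb_0_right[simp]: "gb Q m 0 = 1"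
  by (cases m) auto

lemma gb_Suc_Suc: "gb Q (Suc m) (Suc k) = gb Q m k + Q ^ Suc k * gb Q m (Suc k)"
  by simp

lemma gb_above: "k > m \<Longrightarrow> gb Q m k = 0"
proof (induction m arbitrary: k)
  case 0 then show ?case by simp
next
  case (Suc m)
  then obtain k' where k: "k = Suc k'" "k' > m" by (cases k) auto
  then show ?case using Suc.IH by simp
qed

lemma aux_ring1: "(p::'a::comm_ring_1) * (1 - x) + x * p * (1 - y) = p * (1 - x * y)"
  by (simp add: algebra_simps)

lemma aux_ring2: "(x::'a::comm_ring_1) * p * (1 - y) + p * (1 - x) = p * (1 - x * y)"
  by (simp add: algebra_simps)

definition qpoch :: "'a::comm_ring_1 \<Rightarrow> nat \<Rightarrow> 'a" where
  "qpoch Q n = (\<Prod>i<n. 1 - Q ^ Suc i)"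

lemma qpoch_0[simp]: "qpoch Q 0 = 1" by (simp add: qpoch_def)
lemma qpoch_Suc: "qpoch Q (Suc n) = qpoch Q n * (1 - Q ^ Suc n)" by (simp add: qpoch_def)

lemma gb_poch: "k \<le> m \<Longrightarrow> gb Q m k * qpoch Q k * qpoch Q (m - k) = qpoch Q m"
proof (induction m arbitrary: k)
  case 0 then show ?case by simp
next
  case (Suc m)
  show ?case
  proof (cases k)
    case 0 then show ?thesis by simp
  next
    case (Suc k')
    then have k'm: "k' \<le> m" using Suc.prems by simp
    have 1: "gb Q m k' * qpoch Q k' * qpoch Q (m - k') = qpoch Q m" using Suc.IH k'm by blast
    have 2: "Q ^ Suc k' * gb Q m (Suc k') * qpoch Q (Suc k') * qpoch Q (m - k')
             = Q ^ Suc k' * qpoch Q m * (1 - Q ^ (m - k'))"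
    proof (cases "Suc k' \<le> m")
      case True
      then have e: "m - k' = Suc (m - Suc k')" by simp
      have "gb Q m (Suc k') * qpoch Q (Suc k') * qpoch Q (m - Suc k') = qpoch Q m"
        using Suc.IH True by blast
      then show ?thesis unfolding e qpoch_Suc[of Q "m - Suc k'"] 
        by (simp only: e[symmetric]) (metis (no_types, lifting) mult.assoc mult.left_commute)
    next
      case False
      then have "k' = m" using k'm by simp
      then show ?thesis by (simp add: gb_above)
    qed
    have "gb Q (Suc m) k * qpoch Q k * qpoch Q (Suc m - k)
        = (gb Q m k' + Q ^ Suc k' * gb Q m (Suc k')) * qpoch Q (Suc k') * qpoch Q (m - k')"
      using Suc by simp
    also have "\<dots> = gb Q m k' * qpoch Q k' * qpoch Q (m - k') * (1 - Q ^ Suc k')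
        + Q ^ Suc k' * gb Q m (Suc k') * qpoch Q (Suc k') * qpoch Q (m - k')"
      by (simp add: qpoch_Suc algebra_simps)
    also have "\<dots> = qpoch Q m * (1 - Q ^ Suc k') + Q ^ Suc k' * qpoch Q m * (1 - Q ^ (m - k'))"
      unfolding 1 2 ..
    also have "\<dots> = qpoch Q m * (1 - Q ^ Suc m)"
    proof -
      have "Suc k' + (m - k') = Suc m" using k'm by simp
      then have "Q ^ Suc k' * Q ^ (m - k') = Q ^ Suc m" by (metis power_add)
      then show ?thesis using aux_ring1[of "qpoch Q m" "Q ^ Suc k'" "Q ^ (m - k')"] by simp
    qed
    also have "\<dots> = qpoch Q (Suc m)" by (simp add: qpoch_Suc)
    finally show ?thesis .
  qed
qed

lemma gb_pascal2:
  fixes Q :: "'a::idom"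
  assumes nz: "\<And>j. qpoch Q j \<noteq> 0" and km: "k \<le> m"
  shows "gb Q (Suc m) (Suc k) = Q ^ (m - k) * gb Q m k + gb Q m (Suc k)"
proof -
  have A: "gb Q (Suc m) (Suc k) * qpoch Q (Suc k) * qpoch Q (m - k) = qpoch Q (Suc m)"
    using gb_poch[of "Suc k" "Suc m" Q] km by simp
  have B: "gb Q m k * qpoch Q k * qpoch Q (m - k) = qpoch Q m" using gb_poch km by blast
  have C: "gb Q m (Suc k) * qpoch Q (Suc k) * qpoch Q (m - k) = qpoch Q m * (1 - Q ^ (m - k))"
  proof (cases "Suc k \<le> m")
    case True
    then have e: "m - k = Suc (m - Suc k)" by simp
    have "gb Q m (Suc k) * qpoch Q (Suc k) * qpoch Q (m - Suc k) = qpoch Q m"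
      using gb_poch True by blast
    then show ?thesis unfolding e qpoch_Suc[of Q "m - Suc k"]
      by (simp only: e[symmetric]) (metis (no_types, lifting) mult.assoc)
  next
    case False
    then have "k = m" using km by simp
    then show ?thesis by (simp add: gb_above)
  qed
  have "(Q ^ (m - k) * gb Q m k + gb Q m (Suc k)) * qpoch Q (Suc k) * qpoch Q (m - k)
      = Q ^ (m - k) * (gb Q m k * qpoch Q k * qpoch Q (m - k)) * (1 - Q ^ Suc k)
        + gb Q m (Suc k) * qpoch Q (Suc k) * qpoch Q (m - k)"
    by (simp add: qpoch_Suc algebra_simps)
  also have "\<dots> = Q ^ (m - k) * qpoch Q m * (1 - Q ^ Suc k) + qpoch Q m * (1 - Q ^ (m - k))"
    unfolding B C ..
  also have "\<dots> = qpoch Q (Suc m)"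
  proof -
    have "(m - k) + Suc k = Suc m" using km by simp
    then have "Q ^ (m - k) * Q ^ Suc k = Q ^ Suc m" by (metis power_add)
    then show ?thesis using aux_ring2[of "Q ^ (m - k)" "qpoch Q m" "Q ^ Suc k"]
      by (simp only: qpoch_Suc mult.commute[of "Q ^ (m - k)" "qpoch Q m"] mult.assoc)
  qed
  finally have "(Q ^ (m - k) * gb Q m k + gb Q m (Suc k)) * (qpoch Q (Suc k) * qpoch Q (m - k))
      = gb Q (Suc m) (Suc k) * (qpoch Q (Suc k) * qpoch Q (m - k))"
    using A by (simp add: mult.assoc)
  moreover have "qpoch Q (Suc k) * qpoch Q (m - k) \<noteq> 0" using nz by simp
  ultimately show ?thesis by simp
qed

definition Aj :: "'a::comm_ring_1 \<Rightarrow> 'a \<Rightarrow> int \<Rightarrow> 'a" where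
  "Aj a b j = a ^ tri j * b ^ tri (- j)"

definition Gz :: "'a::comm_ring_1 \<Rightarrow> nat \<Rightarrow> int \<Rightarrow> 'a" where
  "Gz Q m k = (if k < 0 then 0 else gb Q m (nat k))"

lemma Gz_neg[simp]: "k < 0 \<Longrightarrow> Gz Q m k = 0" by (simp add: Gz_def)
lemma Gz_above[simp]: "k > int m \<Longrightarrow> Gz Q m k = 0" by (simp add: Gz_def gb_above)

lemma Gz_pascal:
  fixes Q :: "'a::idom"
  assumes nz: "\<And>j. qpoch Q j \<noteq> 0"
  shows "Gz Q (m + 2) K = Q ^ nat (int m + 2 - K) * Gz Q m (K - 2) + (1 + Q ^ (m + 1)) * Gz Q m (K - 1)
           + Q ^ nat K * Gz Q m K"
proof -
  consider "K < 0" | "K = 0" | "K = 1" | "K \<ge> 2" "K \<le> int m + 2" | "K > int m + 2" by linarith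
  then show ?thesis
  proof cases
    case 1 then show ?thesis by simp
  next
    case 2 then show ?thesis by (simp add: Gz_def)
  next
    case 3
    have "gb Q (Suc m) (Suc 0) = Q ^ m * gb Q m 0 + gb Q m (Suc 0)"
      using gb_pascal2[OF nz, of 0 m] by simp
    then show ?thesis using 3 by (simp add: Gz_def algebra_simps numeral_2_eq_2)
  next
    case 4
    define k where "k = nat (K - 2)"
    have K: "K = int k + 2" and km: "k \<le> m" using 4 by (auto simp: k_def)
    have L: "Gz Q (m + 2) K = gb Q (Suc (Suc m)) (Suc (Suc k))"
      using K by (simp add: Gz_def nat_add_distrib)
    have P1: "gb Q (Suc (Suc m)) (Suc (Suc k)) = gb Q (Suc m) (Suc k) + Q ^ (k + 2) * gb Q (Suc m) (Suc (Suc k))"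
      by simp
    have P2: "gb Q (Suc m) (Suc k) = Q ^ (m - k) * gb Q m k + gb Q m (Suc k)"
      by (rule gb_pascal2[OF nz km])
    have P3: "Q ^ (k + 2) * gb Q (Suc m) (Suc (Suc k)) = Q ^ (m + 1) * gb Q m (Suc k) + Q ^ (k + 2) * gb Q m (Suc (Suc k))"
    proof (cases "Suc k \<le> m")
      case True
      have "gb Q (Suc m) (Suc (Suc k)) = Q ^ (m - Suc k) * gb Q m (Suc k) + gb Q m (Suc (Suc k))"
        by (rule gb_pascal2[OF nz True])
      moreover have "Q ^ (k + 2) * Q ^ (m - Suc k) = Q ^ (m + 1)"
      proof -
        have "(k + 2) + (m - Suc k) = m + 1" using True by simp
        then show ?thesis by (metis power_add)
      qed
      ultimately show ?thesis by (simp add: algebra_simps) (metis mult.assoc)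
    next
      case False
      then have "k = m" using km by simp
      then show ?thesis by (simp add: gb_above)
    qed
    have R: "Q ^ nat (int m + 2 - K) * Gz Q m (K - 2) + (1 + Q ^ (m + 1)) * Gz Q m (K - 1) + Q ^ nat K * Gz Q m K
        = Q ^ (m - k) * gb Q m k + (1 + Q ^ (m + 1)) * gb Q m (Suc k) + Q ^ (k + 2) * gb Q m (Suc (Suc k))"
    proof -
      have a: "nat (int m + 2 - K) = m - k" using K km by simp
      have b: "Gz Q m (K - 2) = gb Q m k" using K by (simp add: Gz_def)
      have c: "Gz Q m (K - 1) = gb Q m (Suc k)" using K by (simp add: Gz_def nat_add_distrib)
      have d: "Gz Q m K = gb Q m (Suc (Suc k))" using K by (simp add: Gz_def nat_add_distrib)
      have e: "nat K = k + 2" using K by simp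
      show ?thesis unfolding a b c d e ..
    qed
    show ?thesis unfolding L R P1 P2 P3 by (simp add: algebra_simps)
  next
    case 5 then show ?thesis by simp
  qed
qed

lemma sum_shift_int:
  "(\<Sum>j\<in>{lo..hi::int}. F (j + c)) = (\<Sum>i\<in>{lo+c..hi+c}. F i)"
proof -
  have "(\<Sum>i\<in>{lo+c..hi+c}. F i) = (\<Sum>i\<in>(\<lambda>j. j + c) ` {lo..hi}. F i)" by simp
  also have "\<dots> = (\<Sum>j\<in>{lo..hi}. F (j + c))" by (subst sum.reindex) (auto simp: inj_on_def)
  finally show ?thesis by simp
qed

lemma sum_extend_int:
  assumes "lo' \<le> lo" "hi \<le> hi'" "\<And>j. j < lo \<Longrightarrow> F j = 0" "\<And>j. j > hi \<Longrightarrow> F j = 0"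
  shows "(\<Sum>j\<in>{lo'..hi'::int}. F j) = (\<Sum>j\<in>{lo..hi}. F j)"
proof (rule sum.mono_neutral_right)
  show "finite {lo'..hi'}" by simp
  show "{lo..hi} \<subseteq> {lo'..hi'}" using assms by auto
  show "\<forall>i\<in>{lo'..hi'} - {lo..hi}. F i = 0" using assms by auto
qed

lemma Aj_a:
  assumes "j \<le> int N"
  shows "a * (a * b) ^ N * Aj a b j = (a * b) ^ nat (int N - j) * Aj a b (j + 1)"
proof -
  have h: "int (nat (int N - j)) = int N - j" using assms by simp
  have "int (tri (j + 1) + nat (int N - j)) = int (Suc (tri j + N))"
    using tri_Suc[of j] h by simp
  then have e1: "tri (j + 1) + nat (int N - j) = Suc (tri j + N)" by (simp only: of_nat_eq_iff)
  have "int (tri (- (j + 1)) + nat (int N - j)) = int (tri (- j) + N)"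
    using tri_neg[of "j+1"] tri_Suc[of j] tri_neg[of j] h by simp
  then have e2: "tri (- (j + 1)) + nat (int N - j) = tri (- j) + N" by (simp only: of_nat_eq_iff)
  have "a * (a * b) ^ N * Aj a b j = a ^ Suc (tri j + N) * b ^ (tri (- j) + N)"
    unfolding Aj_def power_mult_distrib by (simp add: power_add mult_ac)
  also have "\<dots> = a ^ (tri (j + 1) + nat (int N - j)) * b ^ (tri (- (j + 1)) + nat (int N - j))"
    unfolding e1 e2 ..
  also have "\<dots> = (a * b) ^ nat (int N - j) * Aj a b (j + 1)"
    unfolding Aj_def power_mult_distrib by (simp add: power_add mult_ac)
  finally show ?thesis .
qed

lemma Aj_b:
  assumes "j \<ge> - int N"
  shows "b * (a * b) ^ N * Aj a b j = (a * b) ^ nat (int N + j) * Aj a b (j - 1)"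
proof -
  have h: "int (nat (int N + j)) = int N + j" using assms by simp
  have "int (tri (j - 1) + nat (int N + j)) = int (tri j + N)"
    using tri_Suc[of "j - 1"] h by simp
  then have e1: "tri (j - 1) + nat (int N + j) = tri j + N" by (simp only: of_nat_eq_iff)
  have "int (tri (- (j - 1)) + nat (int N + j)) = int (Suc (tri (- j) + N))"
    using tri_Suc[of "- j"] h by simp
  then have e2: "tri (- (j - 1)) + nat (int N + j) = Suc (tri (- j) + N)" by (simp only: of_nat_eq_iff)
  have "b * (a * b) ^ N * Aj a b j = a ^ (tri j + N) * b ^ Suc (tri (- j) + N)"
    unfolding Aj_def power_mult_distrib by (simp add: power_add mult_ac)
  also have "\<dots> = a ^ (tri (j - 1) + nat (int N + j)) * b ^ (tri (- (j - 1)) + nat (int N + j))"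
    unfolding e1 e2 ..
  also have "\<dots> = (a * b) ^ nat (int N + j) * Aj a b (j - 1)"
    unfolding Aj_def power_mult_distrib by (simp add: power_add mult_ac)
  finally show ?thesis .
qed

definition RJ :: "'a::comm_ring_1 \<Rightarrow> 'a \<Rightarrow> nat \<Rightarrow> 'a" where
  "RJ a b N = (\<Sum>j\<in>{- int N..int N}. Gz (a * b) (2 * N) (int N + j) * Aj a b j)"

lemma RJ_step:
  fixes a b :: "'a::idom"
  assumes nz: "\<And>j. qpoch (a * b) j \<noteq> 0"
  shows "RJ a b N * ((1 + a * (a * b) ^ N) * (1 + b * (a * b) ^ N)) = RJ a b (Suc N)"
proof -
  define Q where "Q = a * b"
  define n where "n = int N"
  define G where "G = Gz Q (2 * N)"
  define A where "A = Aj a b"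
  define F1 where "F1 i = G (n + i) * (1 + Q ^ (2 * N + 1)) * A i" for i
  define F2 where "F2 i = G (n + i - 1) * Q ^ nat (n + 1 - i) * A i" for i
  define F3 where "F3 i = G (n + i + 1) * Q ^ nat (n + i + 1) * A i" for i
  have exp: "(1 + a * Q ^ N) * (1 + b * Q ^ N) = (1 + Q ^ (2 * N + 1)) + a * Q ^ N + b * Q ^ N"
  proof -
    have e: "Q ^ (2 * N + 1) = Q * Q ^ N * Q ^ N"
      by (simp add: power_add[symmetric] mult_2)
    have "a * Q ^ N * (b * Q ^ N) = Q ^ (2 * N + 1)" unfolding e
      by (simp add: Q_def mult_ac)
    then show ?thesis by (simp add: algebra_simps)
  qed
  have RJN: "RJ a b N = (\<Sum>j\<in>{-n..n}. G (n + j) * A j)"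
    unfolding RJ_def G_def A_def Q_def n_def ..
  have "RJ a b N * ((1 + a * Q ^ N) * (1 + b * Q ^ N))
      = (\<Sum>j\<in>{-n..n}. F1 j) + (\<Sum>j\<in>{-n..n}. G (n + j) * (a * Q ^ N * A j))
        + (\<Sum>j\<in>{-n..n}. G (n + j) * (b * Q ^ N * A j))"
  proof -
    have "RJ a b N * ((1 + a * Q ^ N) * (1 + b * Q ^ N)) = (\<Sum>j\<in>{-n..n}. G (n + j) * A j * ((1 + a * Q ^ N) * (1 + b * Q ^ N)))"
      unfolding RJN by (simp add: sum_distrib_right)
    also have "\<dots> = (\<Sum>j\<in>{-n..n}. F1 j + G (n + j) * (a * Q ^ N * A j) + G (n + j) * (b * Q ^ N * A j))"
      by (rule sum.cong[OF refl]) (simp only: exp, simp add: F1_def algebra_simps)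
    also have "\<dots> = (\<Sum>j\<in>{-n..n}. F1 j) + (\<Sum>j\<in>{-n..n}. G (n + j) * (a * Q ^ N * A j))
        + (\<Sum>j\<in>{-n..n}. G (n + j) * (b * Q ^ N * A j))"
      by (simp add: sum.distrib)
    finally show ?thesis .
  qed
  also have "(\<Sum>j\<in>{-n..n}. G (n + j) * (a * Q ^ N * A j)) = (\<Sum>i\<in>{-n-1..n+1}. F2 i)"
  proof -
    have "(\<Sum>j\<in>{-n..n}. G (n + j) * (a * Q ^ N * A j)) = (\<Sum>j\<in>{-n..n}. F2 (j + 1))"
    proof (rule sum.cong[OF refl])
      fix j assume "j \<in> {-n..n}"
      then have "j \<le> int N" by (simp add: n_def)
      from Aj_a[OF this, of a b] show "G (n + j) * (a * Q ^ N * A j) = F2 (j + 1)"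
        unfolding F2_def A_def Q_def n_def by (simp add: mult_ac)
    qed
    also have "\<dots> = (\<Sum>i\<in>{-n+1..n+1}. F2 i)" by (rule sum_shift_int)
    also have "\<dots> = (\<Sum>i\<in>{-n-1..n+1}. F2 i)"
      by (rule sum_extend_int[symmetric]) (auto simp: F2_def G_def n_def)
    finally show ?thesis .
  qed
  also have "(\<Sum>j\<in>{-n..n}. G (n + j) * (b * Q ^ N * A j)) = (\<Sum>i\<in>{-n-1..n+1}. F3 i)"
  proof -
    have "(\<Sum>j\<in>{-n..n}. G (n + j) * (b * Q ^ N * A j)) = (\<Sum>j\<in>{-n..n}. F3 (j + (-1)))"
    proof (rule sum.cong[OF refl])
      fix j assume "j \<in> {-n..n}"
      then have "j \<ge> - int N" by (simp add: n_def)
      from Aj_b[OF this, of b a] show "G (n + j) * (b * Q ^ N * A j) = F3 (j + (-1))"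
        unfolding F3_def A_def Q_def n_def by (simp add: mult_ac)
    qed
    also have "\<dots> = (\<Sum>i\<in>{-n+(-1)..n+(-1)}. F3 i)" by (rule sum_shift_int)
    also have "\<dots> = (\<Sum>i\<in>{-n-1..n+1}. F3 i)"
      by (rule sum_extend_int[symmetric]) (auto simp: F3_def G_def n_def)
    finally show ?thesis .
  qed
  also have "(\<Sum>j\<in>{-n..n}. F1 j) = (\<Sum>i\<in>{-n-1..n+1}. F1 i)"
    by (rule sum_extend_int[symmetric]) (auto simp: F1_def G_def n_def)
  also have "(\<Sum>i\<in>{-n-1..n+1}. F1 i) + (\<Sum>i\<in>{-n-1..n+1}. F2 i) + (\<Sum>i\<in>{-n-1..n+1}. F3 i)
      = (\<Sum>i\<in>{-n-1..n+1}. Gz Q (2 * N + 2) (n + 1 + i) * A i)"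
  proof -
    have "F1 i + F2 i + F3 i = Gz Q (2 * N + 2) (n + 1 + i) * A i" for i
    proof -
      have "Gz Q (2 * N + 2) (n + 1 + i) = Q ^ nat (int (2 * N) + 2 - (n + 1 + i)) * G (n + 1 + i - 2)
          + (1 + Q ^ (2 * N + 1)) * G (n + 1 + i - 1) + Q ^ nat (n + 1 + i) * G (n + 1 + i)"
        unfolding G_def Q_def by (rule Gz_pascal[OF nz])
      moreover have "nat (int (2 * N) + 2 - (n + 1 + i)) = nat (n + 1 - i)" by (simp add: n_def)
      ultimately show ?thesis unfolding F1_def F2_def F3_def
        by (simp add: algebra_simps)
    qed
    then show ?thesis by (simp add: sum.distrib[symmetric])
  qed
  also have "\<dots> = RJ a b (Suc N)"
  proof -
    have e: "{-n-1..n+1} = {- int (Suc N)..int (Suc N)}" by (auto simp: n_def)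
    show ?thesis unfolding e unfolding RJ_def Q_def A_def n_def by (simp add: algebra_simps)
  qed
  finally show ?thesis unfolding Q_def .
qed

theorem finite_jtp:
  fixes a b :: "'a::idom"
  assumes nz: "\<And>j. qpoch (a * b) j \<noteq> 0"
  shows "(\<Prod>k<N. (1 + a * (a * b) ^ k) * (1 + b * (a * b) ^ k)) = RJ a b N"
proof (induction N)
  case 0
  have "RJ a b 0 = 1" by (simp add: RJ_def Gz_def Aj_def tri_def)
  then show ?case by simp
next
  case (Suc N)
  then show ?case using RJ_step[OF nz, of N] by simp
qed

definition ja :: "rat \<Rightarrow> nat \<Rightarrow> rat fps" where "ja c k = fps_const c * fps_X ^ k"

definition theta :: "nat \<Rightarrow> nat \<Rightarrow> rat \<Rightarrow> rat fps" where
  "theta \<alpha> \<beta> c = Abs_fps (\<lambda>n. (\<Sum>j\<in>{- int n..int n}. Aj (ja c \<alpha>) (ja c \<beta>) j) $ n)"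

lemma Aj_ja: "Aj (ja c \<alpha>) (ja c \<beta>) j = fps_const (c ^ (tri j + tri (- j))) * fps_X ^ (\<alpha> * tri j + \<beta> * tri (- j))"
  unfolding Aj_def ja_def by (simp add: power_mult_distrib power_add power_mult fps_const_power mult_ac)

lemma tri_sq_ge: "tri j + tri (- j) \<ge> nat \<bar>j\<bar>"
proof -
  have "int (tri j + tri (- j)) = j * j" using tri_sq[of j] by simp
  moreover have "j * j \<ge> \<bar>j\<bar>"
  proof (cases "j = 0")
    case True then show ?thesis by simp
  next
    case False
    then have "\<bar>j\<bar> \<ge> 1" by simp
    then have "\<bar>j\<bar> * 1 \<le> \<bar>j\<bar> * \<bar>j\<bar>" by (intro mult_left_mono) auto
    then show ?thesis by (simp add: abs_mult[symmetric])
  qed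
  ultimately show ?thesis by linarith
qed

lemma Aj_ja_small:
  assumes "\<alpha> \<ge> 1" "\<beta> \<ge> 1" "nat \<bar>j\<bar> \<ge> n"
  shows "eqm n (Aj (ja c \<alpha>) (ja c \<beta>) j) 0"
proof -
  have "\<alpha> * tri j + \<beta> * tri (- j) \<ge> tri j + tri (- j)"
    using assms(1,2) by (intro add_mono) auto
  then have "\<alpha> * tri j + \<beta> * tri (- j) \<ge> n" using tri_sq_ge[of j] assms(3) by linarith
  then show ?thesis unfolding Aj_ja eqm_iff by (simp add: fps_X_power_mult_right_nth)
qed

lemma theta_trunc:
  assumes "\<alpha> \<ge> 1" "\<beta> \<ge> 1" "N \<ge> n"
  shows "eqm n (theta \<alpha> \<beta> c) (\<Sum>j\<in>{- int N..int N}. Aj (ja c \<alpha>) (ja c \<beta>) j)"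
  unfolding eqm_iff
proof (intro allI impI)
  fix i assume "i < n"
  let ?A = "Aj (ja c \<alpha>) (ja c \<beta>)"
  have "eqm (Suc i) (\<Sum>j\<in>{- int N..int N}. ?A j) (\<Sum>j\<in>{- int N..int N}. if \<bar>j\<bar> \<le> int i then ?A j else 0)"
  proof (rule eqm_sum)
    fix j assume "j \<in> {- int N..int N}"
    show "eqm (Suc i) (?A j) (if \<bar>j\<bar> \<le> int i then ?A j else 0)"
    proof (cases "\<bar>j\<bar> \<le> int i")
      case False
      then have "nat \<bar>j\<bar> \<ge> Suc i" by linarith
      then show ?thesis using False Aj_ja_small[OF assms(1,2)] by simp
    qed simp
  qed
  also have "(\<Sum>j\<in>{- int N..int N}. if \<bar>j\<bar> \<le> int i then ?A j else 0) = (\<Sum>j\<in>{- int i..int i}. ?A j)"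
  proof -
    have "(\<Sum>j\<in>{- int N..int N}. if \<bar>j\<bar> \<le> int i then ?A j else 0) = (\<Sum>j\<in>{- int N..int N} \<inter> {j. \<bar>j\<bar> \<le> int i}. ?A j)"
      by (simp add: sum.inter_restrict)
    also have "{- int N..int N} \<inter> {j. \<bar>j\<bar> \<le> int i} = {- int i..int i}"
      using \<open>i < n\<close> assms(3) by auto
    finally show ?thesis .
  qed
  finally have "eqm (Suc i) (\<Sum>j\<in>{- int N..int N}. ?A j) (\<Sum>j\<in>{- int i..int i}. ?A j)" .
  then show "theta \<alpha> \<beta> c $ i = (\<Sum>j\<in>{- int N..int N}. ?A j) $ i"
    unfolding theta_def eqm_iff by simp
qed

definition PQ :: "nat \<Rightarrow> rat fps" where "PQ m = iprod (\<lambda>k. 1 - fps_X ^ (m * Suc k))"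

lemma good_PQ: "m \<ge> 1 \<Longrightarrow> good (\<lambda>k. 1 - fps_X ^ (m * Suc k) :: rat fps)"
  by (rule good_monom1) (metis mult_1 mult_le_mono1)

lemma qpoch_X: "qpoch (fps_X ^ m :: rat fps) r = (\<Prod>i<r. 1 - fps_X ^ (m * Suc i))"
  unfolding qpoch_def by (simp only: power_mult)

lemma qpoch_X_0: "qpoch (fps_X ^ m :: rat fps) r $ 0 = (if m = 0 then 0 ^ r else 1)"
  by (induction r) (auto simp: qpoch_Suc)

lemma qpoch_X_nz: "m \<ge> 1 \<Longrightarrow> qpoch (fps_X ^ m :: rat fps) r \<noteq> 0"
  using qpoch_X_0[of m r] by (metis one_neq_zero fps_zero_nth not_one_le_zero)

lemma PQ_0: "m \<ge> 1 \<Longrightarrow> PQ m $ 0 = 1"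
proof -
  assume m: "m \<ge> 1"
  have "eqm 1 (PQ m) (\<Prod>k<1. 1 - fps_X ^ (m * Suc k))"
    unfolding PQ_def by (rule iprod_eqm[OF good_PQ[OF m]]) simp
  then show ?thesis using m by (simp add: eqm_iff)
qed

lemma PQ_qpoch: "m \<ge> 1 \<Longrightarrow> r \<ge> n \<Longrightarrow> eqm n (PQ m) (qpoch (fps_X ^ m) r)"
  unfolding PQ_def qpoch_X by (rule iprod_eqm[OF good_PQ]) auto

lemma gb_approx:
  assumes m: "m \<ge> 1" and "n \<le> k" "n \<le> M - k" "k \<le> M"
  shows "eqm n (gb (fps_X ^ m) M k) (inverse (PQ m))"
proof -
  let ?Q = "fps_X ^ m :: rat fps"
  let ?P = "PQ m"
  have e: "gb ?Q M k * qpoch ?Q k * qpoch ?Q (M - k) = qpoch ?Q M" using gb_poch assms(4) by blast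
  have "eqm n (gb ?Q M k * ?P * ?P) (gb ?Q M k * qpoch ?Q k * qpoch ?Q (M - k))"
    using PQ_qpoch[OF m] assms(2,3) by (meson eqm_mult eqm_refl)
  also have "\<dots> = qpoch ?Q M" by (rule e)
  finally have 1: "eqm n (gb ?Q M k * ?P * ?P) ?P"
    using PQ_qpoch[OF m, of n M] assms by (meson eqm_sym eqm_trans le_trans diff_le_self)
  have P0: "?P $ 0 \<noteq> 0" using PQ_0[OF m] by simp
  have inv: "?P * inverse ?P = 1" using P0 by (simp add: inverse_mult_eq_1')
  have "eqm n (gb ?Q M k * ?P * ?P * (inverse ?P * inverse ?P)) (?P * (inverse ?P * inverse ?P))"
    by (rule eqm_mult_right[OF 1])
  moreover have "gb ?Q M k * ?P * ?P * (inverse ?P * inverse ?P) = gb ?Q M k"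
    using inv by (simp add: algebra_simps) (metis inv mult.assoc mult.commute mult_1_right)
  moreover have "?P * (inverse ?P * inverse ?P) = inverse ?P"
    using inv by (metis mult.assoc mult_1)
  ultimately show ?thesis by simp
qed

theorem jtp:
  assumes a1: "\<alpha> \<ge> 1" and b1: "\<beta> \<ge> 1" and cc: "c * c = 1"
  shows "theta \<alpha> \<beta> c = iprod (\<lambda>k. 1 + fps_const c * fps_X ^ (\<alpha> + (\<alpha> + \<beta>) * k))
          * iprod (\<lambda>k. 1 + fps_const c * fps_X ^ (\<beta> + (\<alpha> + \<beta>) * k)) * PQ (\<alpha> + \<beta>)"
proof -
  define m where "m = \<alpha> + \<beta>"
  define a where "a = ja c \<alpha>"
  define b where "b = ja c \<beta>"
  define f1 where "f1 k = 1 + fps_const c * fps_X ^ (\<alpha> + m * k)" for k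
  define f2 where "f2 k = 1 + fps_const c * fps_X ^ (\<beta> + m * k)" for k
  define A where "A = Aj a b"
  have m1: "m \<ge> 1" using a1 by (simp add: m_def)
  have ab: "a * b = fps_X ^ m"
  proof -
    have "a * b = (fps_const c * fps_const c) * (fps_X ^ \<alpha> * fps_X ^ \<beta>)"
      unfolding a_def b_def ja_def by (simp only: mult_ac)
    also have "fps_const c * fps_const c = (1 :: rat fps)"
      using cc by (metis fps_const_mult fps_const_1_eq_1)
    finally show ?thesis by (simp add: m_def power_add)
  qed
  have f1e: "f1 k = 1 + a * (a * b) ^ k" for k
    unfolding f1_def by (simp only: ab) (simp add: a_def ja_def power_mult power_add mult.assoc)
  have f2e: "f2 k = 1 + b * (a * b) ^ k" for k
    unfolding f2_def by (simp only: ab) (simp add: b_def ja_def power_mult power_add mult.assoc)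
  have mk: "k \<le> m * k" for k using mult_le_mono1[OF m1, of k] by simp
  have g1: "good f1" unfolding f1_def
  proof (rule good_monom)
    fix k show "Suc k \<le> \<alpha> + m * k" using mk[of k] a1 by linarith
  qed
  have g2: "good f2" unfolding f2_def
  proof (rule good_monom)
    fix k show "Suc k \<le> \<beta> + m * k" using mk[of k] b1 by linarith
  qed
  have nz: "\<And>j. qpoch (a * b) j \<noteq> 0" unfolding ab using qpoch_X_nz[OF m1] by blast
  have P0: "PQ m $ 0 \<noteq> 0" using PQ_0[OF m1] by simp
  have main: "iprod f1 * iprod f2 = inverse (PQ m) * theta \<alpha> \<beta> c"
  proof (rule fps_eq_eqm)
    fix n :: nat
    define N where "N = 2 * n"
    have "eqm n (iprod f1 * iprod f2) ((\<Prod>k<N. f1 k) * (\<Prod>k<N. f2 k))"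
      by (rule eqm_mult; rule iprod_eqm) (simp_all add: g1 g2 N_def)
    also have "(\<Prod>k<N. f1 k) * (\<Prod>k<N. f2 k) = RJ a b N"
      unfolding prod.distrib[symmetric] f1e f2e by (rule finite_jtp[OF nz])
    also have "RJ a b N = (\<Sum>j\<in>{- int N..int N}. Gz (fps_X ^ m) (2 * N) (int N + j) * A j)"
      unfolding RJ_def ab A_def ..
    finally have 1: "eqm n (iprod f1 * iprod f2) (\<Sum>j\<in>{- int N..int N}. Gz (fps_X ^ m) (2 * N) (int N + j) * A j)" .
    have 2: "eqm n (\<Sum>j\<in>{- int N..int N}. Gz (fps_X ^ m) (2 * N) (int N + j) * A j)
                   (\<Sum>j\<in>{- int N..int N}. inverse (PQ m) * A j)"
    proof (rule eqm_sum)
      fix j assume j: "j \<in> {- int N..int N}"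
      show "eqm n (Gz (fps_X ^ m) (2 * N) (int N + j) * A j) (inverse (PQ m) * A j)"
      proof (cases "nat \<bar>j\<bar> \<ge> n")
        case True
        have A0: "eqm n (A j) 0" unfolding A_def a_def b_def by (rule Aj_ja_small[OF a1 b1 True])
        have "eqm n (Gz (fps_X ^ m) (2 * N) (int N + j) * A j) (Gz (fps_X ^ m) (2 * N) (int N + j) * 0)"
          by (rule eqm_mult_left[OF A0])
        moreover have "eqm n (inverse (PQ m) * A j) (inverse (PQ m) * 0)"
          by (rule eqm_mult_left[OF A0])
        ultimately show ?thesis by (simp add: eqm_iff)
      next
        case False
        define k where "k = nat (int N + j)"
        have Gk: "Gz (fps_X ^ m) (2 * N) (int N + j) = gb (fps_X ^ m) (2 * N) k"
          using False by (simp add: Gz_def k_def N_def)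
        have "n \<le> k" "n \<le> 2 * N - k" "k \<le> 2 * N" using False j by (auto simp: k_def N_def)
        then have "eqm n (gb (fps_X ^ m) (2 * N) k) (inverse (PQ m))" by (rule gb_approx[OF m1])
        then show ?thesis unfolding Gk by (rule eqm_mult_right)
      qed
    qed
    have 3: "eqm n (\<Sum>j\<in>{- int N..int N}. inverse (PQ m) * A j) (inverse (PQ m) * theta \<alpha> \<beta> c)"
    proof -
      have "eqm n (theta \<alpha> \<beta> c) (\<Sum>j\<in>{- int N..int N}. A j)"
        unfolding A_def a_def b_def by (rule theta_trunc[OF a1 b1]) (simp add: N_def)
      then have "eqm n (inverse (PQ m) * theta \<alpha> \<beta> c) (inverse (PQ m) * (\<Sum>j\<in>{- int N..int N}. A j))"
        by (rule eqm_mult_left)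
      then show ?thesis by (simp add: sum_distrib_left eqm_sym)
    qed
    show "eqm n (iprod f1 * iprod f2) (inverse (PQ m) * theta \<alpha> \<beta> c)"
      using 1 2 3 by (meson eqm_trans)
  qed
  have "iprod f1 * iprod f2 * PQ m = theta \<alpha> \<beta> c * (inverse (PQ m) * PQ m)"
    unfolding main by (simp add: mult_ac)
  also have "inverse (PQ m) * PQ m = 1" using P0 by (simp add: inverse_mult_eq_1)
  finally show ?thesis unfolding f1_def f2_def m_def by simp
qed

definition pp :: "rat \<Rightarrow> nat \<Rightarrow> nat \<Rightarrow> rat fps" where
  "pp c r m = iprod (\<lambda>k. 1 + fps_const c * fps_X ^ (r + m * k))"

lemma fps_const_m1[simp]: "fps_const (-1 :: rat) = -1"
  by (metis fps_const_neg fps_const_1_eq_1)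

abbreviation EE :: "nat \<Rightarrow> rat fps" where "EE k \<equiv> euler_Ek k"

lemma good_pp: "r \<ge> 1 \<Longrightarrow> m \<ge> 1 \<Longrightarrow> good (\<lambda>k. 1 + fps_const c * fps_X ^ (r + m * k) :: rat fps)"
proof (rule good_monom)
  fix k assume "r \<ge> 1" "m \<ge> 1"
  have "k \<le> m * k" using mult_le_mono1[OF \<open>m \<ge> 1\<close>, of k] by simp
  then show "Suc k \<le> r + m * k" using \<open>r \<ge> 1\<close> by linarith
qed

lemma EE_pp: "k \<ge> 1 \<Longrightarrow> EE k = pp (-1) k k"
proof -
  assume k: "k \<ge> 1"
  have "(\<lambda>i. 1 - fps_X ^ (k * Suc i) :: rat fps) = (\<lambda>i. 1 + fps_const (-1) * fps_X ^ (k + k * i))"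
    by (simp add: algebra_simps)
  then show ?thesis unfolding euler_Ek_iprod[OF k] pp_def by simp
qed

lemma PQ_EE: "m \<ge> 1 \<Longrightarrow> PQ m = EE m"
  unfolding euler_Ek_iprod PQ_def ..

lemma pp_split2: "r \<ge> 1 \<Longrightarrow> m \<ge> 1 \<Longrightarrow> pp c r m = pp c r (2 * m) * pp c (r + m) (2 * m)"
proof -
  assume r: "r \<ge> 1" and m: "m \<ge> 1"
  have "pp c r m = (\<Prod>i<2. iprod (\<lambda>k. 1 + fps_const c * fps_X ^ (r + m * (2 * k + i))))"
    unfolding pp_def by (rule iprod_split[OF good_pp[OF r m]]) simp
  also have "\<dots> = iprod (\<lambda>k. 1 + fps_const c * fps_X ^ (r + m * (2 * k + 0))) * iprod (\<lambda>k. 1 + fps_const c * fps_X ^ (r + m * (2 * k + 1)))"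
    by (simp add: numeral_2_eq_2)
  also have "(\<lambda>k. r + m * (2 * k + 0)) = (\<lambda>k. r + 2 * m * k)" by (simp add: algebra_simps)
  also have "(\<lambda>k. r + m * (2 * k + 1)) = (\<lambda>k. (r + m) + 2 * m * k)" by (simp add: algebra_simps)
  also have "iprod (\<lambda>k. 1 + fps_const c * fps_X ^ (r + 2 * m * k)) * iprod (\<lambda>k. 1 + fps_const c * fps_X ^ ((r + m) + 2 * m * k)) = pp c r (2 * m) * pp c (r + m) (2 * m)"
    by (simp add: pp_def)
  finally show ?thesis .
qed

lemma pp_split3: "r \<ge> 1 \<Longrightarrow> m \<ge> 1 \<Longrightarrow> pp c r m = pp c r (3 * m) * pp c (r + m) (3 * m) * pp c (r + 2 * m) (3 * m)"
proof -
  assume r: "r \<ge> 1" and m: "m \<ge> 1"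
  have "pp c r m = (\<Prod>i<3. iprod (\<lambda>k. 1 + fps_const c * fps_X ^ (r + m * (3 * k + i))))"
    unfolding pp_def by (rule iprod_split[OF good_pp[OF r m]]) simp
  also have "\<dots> = iprod (\<lambda>k. 1 + fps_const c * fps_X ^ (r + m * (3 * k + 0))) * iprod (\<lambda>k. 1 + fps_const c * fps_X ^ (r + m * (3 * k + 1)))
       * iprod (\<lambda>k. 1 + fps_const c * fps_X ^ (r + m * (3 * k + 2)))"
    by (simp add: numeral_3_eq_3 numeral_2_eq_2 mult_ac)
  also have "(\<lambda>k. r + m * (3 * k + 0)) = (\<lambda>k. r + 3 * m * k)" by (simp add: algebra_simps)
  also have "(\<lambda>k. r + m * (3 * k + 1)) = (\<lambda>k. (r + m) + 3 * m * k)" by (simp add: algebra_simps)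
  also have "(\<lambda>k. r + m * (3 * k + 2)) = (\<lambda>k. (r + 2 * m) + 3 * m * k)" by (simp add: algebra_simps)
  also have "iprod (\<lambda>k. 1 + fps_const c * fps_X ^ (r + 3 * m * k)) * iprod (\<lambda>k. 1 + fps_const c * fps_X ^ ((r + m) + 3 * m * k))
     * iprod (\<lambda>k. 1 + fps_const c * fps_X ^ ((r + 2 * m) + 3 * m * k)) = pp c r (3 * m) * pp c (r + m) (3 * m) * pp c (r + 2 * m) (3 * m)"
    by (simp add: pp_def)
  finally show ?thesis .
qed

lemma pp_pm: "r \<ge> 1 \<Longrightarrow> m \<ge> 1 \<Longrightarrow> pp 1 r m * pp (-1) r m = pp (-1) (2 * r) (2 * m)"
proof -
  assume r: "r \<ge> 1" and m: "m \<ge> 1"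
  have "pp 1 r m * pp (-1) r m = iprod (\<lambda>k. (1 + fps_const 1 * fps_X ^ (r + m * k)) * (1 + fps_const (-1) * fps_X ^ (r + m * k)))"
    unfolding pp_def by (rule iprod_mult[symmetric]) (rule good_pp[OF r m])+
  also have "(\<lambda>k. (1 + fps_const 1 * fps_X ^ (r + m * k)) * (1 + fps_const (-1) * fps_X ^ (r + m * k)))
      = (\<lambda>k. 1 + fps_const (-1) * fps_X ^ (2 * r + 2 * m * k) :: rat fps)"
  proof
    fix k
    have "(fps_X ^ (r + m * k)) * (fps_X ^ (r + m * k)) = (fps_X ^ (2 * r + 2 * m * k) :: rat fps)"
      by (simp add: power_add[symmetric] algebra_simps)
    then show "(1 + fps_const 1 * fps_X ^ (r + m * k)) * (1 + fps_const (-1) * fps_X ^ (r + m * k))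
      = (1 + fps_const (-1) * fps_X ^ (2 * r + 2 * m * k) :: rat fps)"
      by (simp add: algebra_simps)
  qed
  also have "iprod (\<lambda>k. 1 + fps_const (-1) * fps_X ^ (2 * r + 2 * m * k)) = pp (-1) (2 * r) (2 * m)"
    unfolding pp_def ..
  finally show ?thesis .
qed

lemma jtp_pp:
  assumes "\<alpha> \<ge> 1" "\<beta> \<ge> 1" "c * c = 1"
  shows "theta \<alpha> \<beta> c = pp c \<alpha> (\<alpha> + \<beta>) * pp c \<beta> (\<alpha> + \<beta>) * EE (\<alpha> + \<beta>)"
  using jtp[OF assms] PQ_EE[of "\<alpha> + \<beta>"] assms(1) unfolding pp_def by simp

lemma EE_split: "s \<ge> 1 \<Longrightarrow> EE s = pp (-1) s (2 * s) * EE (2 * s)"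
  using pp_split2[of s s "-1"] EE_pp[of s] EE_pp[of "2 * s"] by (simp add: mult_2)

lemma inst1: assumes "s \<ge> 1" shows "theta s s (-1) * EE (2 * s) = EE s ^ 2"
proof -
  have t: "theta s s (-1) = pp (-1) s (2 * s) * pp (-1) s (2 * s) * EE (2 * s)"
    using jtp_pp[of s s "-1"] assms by (simp add: mult_2)
  show ?thesis unfolding t EE_split[OF assms] by (simp add: power2_eq_square mult_ac)
qed

lemma inst2: assumes "s \<ge> 1" shows "theta s (3 * s) 1 * EE s = EE (2 * s) ^ 2"
proof -
  have t: "theta s (3 * s) 1 = pp 1 s (4 * s) * pp 1 (3 * s) (4 * s) * EE (4 * s)"
    using jtp_pp[of s "3 * s" 1] assms by simp
  have sp: "pp 1 s (2 * s) = pp 1 s (4 * s) * pp 1 (3 * s) (4 * s)"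
    using pp_split2[of s "2 * s" 1] assms by simp
  have pm: "pp 1 s (2 * s) * pp (-1) s (2 * s) = pp (-1) (2 * s) (4 * s)"
    using pp_pm[of s "2 * s"] assms by simp
  have e2: "EE (2 * s) = pp (-1) (2 * s) (4 * s) * EE (4 * s)"
    using EE_split[of "2 * s"] assms by simp
  have "theta s (3 * s) 1 * EE s = (pp 1 s (2 * s) * pp (-1) s (2 * s)) * EE (4 * s) * EE (2 * s)"
    unfolding t EE_split[OF assms] sp by (simp add: mult_ac)
  also have "\<dots> = EE (2 * s) ^ 2" unfolding pm by (simp add: e2[symmetric] power2_eq_square)
  finally show ?thesis .
qed

lemma inst3: assumes "s \<ge> 1" shows "theta s (5 * s) (-1) * EE (2 * s) * EE (3 * s) = EE s * EE (6 * s) ^ 2"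
proof -
  have t: "theta s (5 * s) (-1) = pp (-1) s (6 * s) * pp (-1) (5 * s) (6 * s) * EE (6 * s)"
    using jtp_pp[of s "5 * s" "-1"] assms by simp
  have sp: "pp (-1) s (2 * s) = pp (-1) s (6 * s) * pp (-1) (3 * s) (6 * s) * pp (-1) (5 * s) (6 * s)"
    using pp_split3[of s "2 * s" "-1"] assms by simp
  have e3: "EE (3 * s) = pp (-1) (3 * s) (6 * s) * EE (6 * s)"
    using EE_split[of "3 * s"] assms by simp
  have "theta s (5 * s) (-1) * EE (2 * s) * EE (3 * s) = (pp (-1) s (6 * s) * pp (-1) (3 * s) (6 * s) * pp (-1) (5 * s) (6 * s)) * EE (2 * s) * EE (6 * s) ^ 2"
    unfolding t e3 by (simp add: mult_ac power2_eq_square)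
  also have "\<dots> = EE s * EE (6 * s) ^ 2" unfolding sp[symmetric] EE_split[OF assms] ..
  finally show ?thesis .
qed

lemma inst4: assumes "s \<ge> 1" shows "theta s (2 * s) 1 * EE s * EE (6 * s) = EE (2 * s) * EE (3 * s) ^ 2"
proof -
  have t: "theta s (2 * s) 1 = pp 1 s (3 * s) * pp 1 (2 * s) (3 * s) * EE (3 * s)"
    using jtp_pp[of s "2 * s" 1] assms by simp
  have sp: "pp 1 s s = pp 1 s (3 * s) * pp 1 (2 * s) (3 * s) * pp 1 (3 * s) (3 * s)"
  proof -
    have e: "s + s = 2 * s" "s + 2 * s = 3 * s" by simp_all
    show ?thesis using pp_split3[of s s 1] assms unfolding e by simp
  qed
  have pm1: "pp 1 s s * pp (-1) s s = EE (2 * s)"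
    using pp_pm[of s s] assms EE_pp[of "2 * s"] by simp
  have pm3: "pp 1 (3 * s) (3 * s) * pp (-1) (3 * s) (3 * s) = EE (6 * s)"
    using pp_pm[of "3 * s" "3 * s"] assms EE_pp[of "6 * s"] by simp
  have "theta s (2 * s) 1 * EE s * EE (6 * s)
      = (pp 1 s (3 * s) * pp 1 (2 * s) (3 * s) * pp 1 (3 * s) (3 * s)) * pp (-1) s s * EE (3 * s) * pp (-1) (3 * s) (3 * s)"
    unfolding t EE_pp[OF assms] pm3[symmetric] by (simp add: mult_ac)
  also have "\<dots> = EE (2 * s) * EE (3 * s) ^ 2"
  proof -
    have e3: "pp (-1) (3 * s) (3 * s) = EE (3 * s)" using EE_pp[of "3 * s"] assms by simp
    show ?thesis unfolding sp[symmetric] e3 by (simp only: pm1 power2_eq_square mult.assoc)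
  qed
  finally show ?thesis .
qed

lemma sum_mod3:
  fixes M :: int
  assumes "M \<ge> 0"
  shows "(\<Sum>j\<in>{-(3*M+1)..3*M+1}. F j) = (\<Sum>m\<in>{-M..M}. F (3*m - 1) + F (3*m) + F (3*m + 1))"
proof -
  have "(\<Sum>j\<in>{-(3*M+1)..3*M+1}. F j) = (\<Sum>p\<in>{-M..M} \<times> {-1..1::int}. F (3 * fst p + snd p))"
  proof (rule sum.reindex_bij_witness[where i = "\<lambda>p. 3 * fst p + snd p" and j = "\<lambda>x. ((x + 1) div 3, x - 3 * ((x + 1) div 3))"])
    fix a :: int assume "a \<in> {-(3*M+1)..3*M+1}"
    show "3 * fst ((a + 1) div 3, a - 3 * ((a + 1) div 3)) + snd ((a + 1) div 3, a - 3 * ((a + 1) div 3)) = a"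
      by simp
    show "((a + 1) div 3, a - 3 * ((a + 1) div 3)) \<in> {-M..M} \<times> {-1..1}"
      using \<open>a \<in> _\<close> by (auto; presburger?)
  next
    fix b :: "int \<times> int" assume "b \<in> {-M..M} \<times> {-1..1}"
    then obtain m r where b: "b = (m, r)" "-M \<le> m" "m \<le> M" "-1 \<le> r" "r \<le> 1" by auto
    show "((3 * fst b + snd b + 1) div 3, 3 * fst b + snd b - 3 * ((3 * fst b + snd b + 1) div 3)) = b"
      using b by (auto; presburger?)
    show "3 * fst b + snd b \<in> {-(3*M+1)..3*M+1}" using b by auto
  qed simp
  also have "\<dots> = (\<Sum>m\<in>{-M..M}. \<Sum>r\<in>{-1..1::int}. F (3 * m + r))"
    by (simp add: sum.cartesian_product case_prod_beta)
  also have "\<dots> = (\<Sum>m\<in>{-M..M}. F (3*m - 1) + F (3*m) + F (3*m + 1))"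
  proof (rule sum.cong[OF refl])
    fix m
    have "{-1..1::int} = {-1, 0, 1}" by auto
    then show "(\<Sum>r\<in>{-1..1::int}. F (3 * m + r)) = F (3*m - 1) + F (3*m) + F (3*m + 1)"
      by (simp add: algebra_simps)
  qed
  finally show ?thesis .
qed

lemma sum_mod2:
  fixes M :: int
  assumes "M \<ge> 0"
  shows "(\<Sum>k\<in>{-(2*M)..2*M+1}. F k) = (\<Sum>m\<in>{-M..M}. F (2*m) + F (2*m + 1))"
proof -
  have "(\<Sum>k\<in>{-(2*M)..2*M+1}. F k) = (\<Sum>p\<in>{-M..M} \<times> {0..1::int}. F (2 * fst p + snd p))"
  proof (rule sum.reindex_bij_witness[where i = "\<lambda>p. 2 * fst p + snd p" and j = "\<lambda>x. (x div 2, x mod 2)"])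
    fix a :: int assume "a \<in> {-(2*M)..2*M+1}"
    show "2 * fst (a div 2, a mod 2) + snd (a div 2, a mod 2) = a" by simp
    show "(a div 2, a mod 2) \<in> {-M..M} \<times> {0..1}"
      using \<open>a \<in> _\<close> by (auto; presburger?)
  next
    fix b :: "int \<times> int" assume "b \<in> {-M..M} \<times> {0..1}"
    then obtain m r where b: "b = (m, r)" "-M \<le> m" "m \<le> M" "0 \<le> r" "r \<le> 1" by auto
    show "((2 * fst b + snd b) div 2, (2 * fst b + snd b) mod 2) = b"
      using b by (auto; presburger?)
    show "2 * fst b + snd b \<in> {-(2*M)..2*M+1}" using b by auto
  qed simp
  also have "\<dots> = (\<Sum>m\<in>{-M..M}. \<Sum>r\<in>{0..1::int}. F (2 * m + r))"
    by (simp add: sum.cartesian_product case_prod_beta)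
  also have "\<dots> = (\<Sum>m\<in>{-M..M}. F (2*m) + F (2*m + 1))"
  proof (rule sum.cong[OF refl])
    fix m
    have "{0..1::int} = {0, 1}" by auto
    then show "(\<Sum>r\<in>{0..1::int}. F (2 * m + r)) = F (2*m) + F (2*m + 1)"
      by simp
  qed
  finally show ?thesis .
qed

lemma sum_neg_int: "(\<Sum>m\<in>{-M..M::int}. F (- m)) = (\<Sum>m\<in>{-M..M}. F m)"
  by (rule sum.reindex_bij_witness[where i = uminus and j = uminus]) auto

definition expo :: "nat \<Rightarrow> nat \<Rightarrow> int \<Rightarrow> nat" where
  "expo \<alpha> \<beta> j = \<alpha> * tri j + \<beta> * tri (- j)"

lemma expo_int: "2 * int (expo \<alpha> \<beta> j) = int \<alpha> * (j * j + j) + int \<beta> * (j * j - j)"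
proof -
  have b: "2 * int (tri (- j)) = j * j - j" using tri_int[of "-j"] by simp
  have a: "2 * int (tri j) = j * j + j" using tri_int[of j] by simp
  have "2 * int (expo \<alpha> \<beta> j) = int \<alpha> * (2 * int (tri j)) + int \<beta> * (2 * int (tri (- j)))"
    unfolding expo_def by (simp add: algebra_simps)
  also have "\<dots> = int \<alpha> * (j * j + j) + int \<beta> * (j * j - j)" unfolding a b ..
  finally show ?thesis .
qed

lemma expo_eqI: "int \<alpha> * (j * j + j) + int \<beta> * (j * j - j) = int \<alpha>' * (j' * j' + j') + int \<beta>' * (j' * j' - j') + 2 * int d
  \<Longrightarrow> expo \<alpha> \<beta> j = expo \<alpha>' \<beta>' j' + d"
  using expo_int[of \<alpha> \<beta> j] expo_int[of \<alpha>' \<beta>' j'] by linarith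

lemma AJ_eq: "Aj (ja c \<alpha>) (ja c \<beta>) j = fps_const (c ^ nat (j * j)) * fps_X ^ expo \<alpha> \<beta> j"
proof -
  have "tri j + tri (- j) = nat (j * j)" using tri_sq[of j] by linarith
  then show ?thesis unfolding Aj_ja expo_def by simp
qed

lemma even_nat_sq: "even (nat (j * j)) \<longleftrightarrow> even j"
proof -
  have "even (nat (j * j)) \<longleftrightarrow> even (j * j)" by (simp add: even_nat_iff)
  then show ?thesis by simp
qed

lemma m1pow: "(-1 :: rat) ^ nat (j * j) = (if even j then 1 else -1)"
  using even_nat_sq[of j] by (simp add: minus_one_power_iff)

lemma AJ_m1: "Aj (ja (-1) \<alpha>) (ja (-1) \<beta>) j = (if even j then 1 else -1) * fps_X ^ expo \<alpha> \<beta> j"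
  unfolding AJ_eq m1pow by (simp add: fps_const_neg)

lemma AJ_p1: "Aj (ja 1 \<alpha>) (ja 1 \<beta>) j = fps_X ^ expo \<alpha> \<beta> j"
  unfolding AJ_eq by simp

abbreviation AJ :: "nat \<Rightarrow> nat \<Rightarrow> rat \<Rightarrow> int \<Rightarrow> rat fps" where
  "AJ \<alpha> \<beta> c j \<equiv> Aj (ja c \<alpha>) (ja c \<beta>) j"

lemma dis1_a: "AJ 1 1 (-1) (3 * m) = AJ 9 9 (-1) m"
proof -
  have "expo 1 1 (3 * m) = expo 9 9 m + 0" by (rule expo_eqI) (simp add: algebra_simps)
  moreover have "even (3 * m) = even m" by simp
  ultimately show ?thesis unfolding AJ_m1 by simp
qed

lemma dis1_b: "AJ 1 1 (-1) (3 * m + 1) = - fps_X * AJ 3 15 (-1) (- m)"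
proof -
  have "expo 1 1 (3 * m + 1) = expo 3 15 (- m) + 1" by (rule expo_eqI) (simp add: algebra_simps)
  moreover have "even (3 * m + 1) = odd m" by simp
  ultimately show ?thesis unfolding AJ_m1 by (simp add: power_add mult_ac)
qed

lemma dis1_c: "AJ 1 1 (-1) (3 * m - 1) = - fps_X * AJ 3 15 (-1) m"
proof -
  have "expo 1 1 (3 * m - 1) = expo 3 15 m + 1" by (rule expo_eqI) (simp add: algebra_simps)
  moreover have "even (3 * m - 1) = odd m" by simp
  ultimately show ?thesis unfolding AJ_m1 by (simp add: power_add mult_ac)
qed

lemma dis2_d: "AJ 1 3 1 (3 * m) = AJ 3 6 1 (2 * m)"
proof -
  have "expo 1 3 (3 * m) = expo 3 6 (2 * m) + 0" by (rule expo_eqI) (simp add: algebra_simps)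
  then show ?thesis unfolding AJ_p1 by simp
qed

lemma dis2_e: "AJ 1 3 1 (3 * m + 1) = fps_X * AJ 9 27 1 (- m)"
proof -
  have "expo 1 3 (3 * m + 1) = expo 9 27 (- m) + 1" by (rule expo_eqI) (simp add: algebra_simps)
  then show ?thesis unfolding AJ_p1 by (simp add: power_add mult_ac)
qed

lemma dis2_f: "AJ 1 3 1 (3 * m - 1) = AJ 3 6 1 (2 * (- m) + 1)"
proof -
  have "expo 1 3 (3 * m - 1) = expo 3 6 (2 * (- m) + 1) + 0" by (rule expo_eqI) (simp add: algebra_simps)
  then show ?thesis unfolding AJ_p1 by simp
qed

lemma sum_comb1:
  fixes x :: "'a::comm_ring_1" and M :: int
  shows "(\<Sum>m\<in>{-M..M}. (- x * B m) + A m + (- x * B (- m))) = (\<Sum>m\<in>{-M..M}. A m) - 2 * x * (\<Sum>m\<in>{-M..M}. B m)"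
proof -
  have "(\<Sum>m\<in>{-M..M}. (- x * B m) + A m + (- x * B (- m)))
     = (\<Sum>m\<in>{-M..M}. A m) - x * (\<Sum>m\<in>{-M..M}. B m) - x * (\<Sum>m\<in>{-M..M}. B (- m))"
  proof -
    have "(\<Sum>m\<in>{-M..M}. (- x * B m) + A m + (- x * B (- m))) = (\<Sum>m\<in>{-M..M}. A m - x * B m - x * B (- m))"
      by (rule sum.cong[OF refl]) (simp add: algebra_simps)
    also have "\<dots> = (\<Sum>m\<in>{-M..M}. A m) - (\<Sum>m\<in>{-M..M}. x * B m) - (\<Sum>m\<in>{-M..M}. x * B (- m))"
      by (simp add: sum_subtractf)
    finally show ?thesis by (simp add: sum_distrib_left)
  qed
  also have "(\<Sum>m\<in>{-M..M}. B (- m)) = (\<Sum>m\<in>{-M..M}. B m)" by (rule sum_neg_int)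
  moreover have "\<And>S T. (S::'a) - x * T - x * T = S - 2 * x * T"
    by (metis diff_diff_eq mult_2 distrib_right)
  ultimately show ?thesis by metis
qed

lemma sum_comb2:
  fixes x :: "'a::comm_ring_1" and M :: int
  assumes "M \<ge> 0"
  shows "(\<Sum>m\<in>{-M..M}. C (2 * (- m) + 1) + C (2 * m) + x * B (- m))
      = (\<Sum>k\<in>{-(2*M)..2*M+1}. C k) + x * (\<Sum>m\<in>{-M..M}. B m)"
proof -
  have "(\<Sum>m\<in>{-M..M}. C (2 * (- m) + 1) + C (2 * m) + x * B (- m))
     = (\<Sum>m\<in>{-M..M}. C (2 * (- m) + 1)) + (\<Sum>m\<in>{-M..M}. C (2 * m)) + x * (\<Sum>m\<in>{-M..M}. B (- m))"
    by (simp add: sum.distrib sum_distrib_left)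
  also have "(\<Sum>m\<in>{-M..M}. C (2 * (- m) + 1)) = (\<Sum>m\<in>{-M..M}. C (2 * m + 1))"
    by (rule sum_neg_int[where F = "\<lambda>m. C (2 * m + 1)"])
  also have "(\<Sum>m\<in>{-M..M}. B (- m)) = (\<Sum>m\<in>{-M..M}. B m)" by (rule sum_neg_int)
  also have "(\<Sum>m\<in>{-M..M}. C (2 * m + 1)) + (\<Sum>m\<in>{-M..M}. C (2 * m)) = (\<Sum>k\<in>{-(2*M)..2*M+1}. C k)"
    by (subst add.commute) (simp only: sum_mod2[OF assms] sum.distrib)
  finally show ?thesis .
qed

theorem dissect1: "theta 1 1 (-1) = theta 9 9 (-1) - 2 * fps_X * theta 3 15 (-1)"
proof (rule fps_eq_eqm)
  fix n :: nat
  define M where "M = int n"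
  have M0: "M \<ge> 0" by (simp add: M_def)
  have e: "{- int (3 * n + 1)..int (3 * n + 1)} = {-(3*M+1)..3*M+1}" by (simp add: M_def)
  have 1: "eqm n (theta 1 1 (-1)) (\<Sum>j\<in>{-(3*M+1)..3*M+1}. AJ 1 1 (-1) j)"
    using theta_trunc[of 1 1 n "3 * n + 1" "-1"] unfolding e by simp
  have "(\<Sum>j\<in>{-(3*M+1)..3*M+1}. AJ 1 1 (-1) j)
      = (\<Sum>m\<in>{-M..M}. AJ 1 1 (-1) (3*m - 1) + AJ 1 1 (-1) (3*m) + AJ 1 1 (-1) (3*m + 1))"
    by (rule sum_mod3[OF M0])
  also have "\<dots> = (\<Sum>m\<in>{-M..M}. (- fps_X * AJ 3 15 (-1) m) + AJ 9 9 (-1) m + (- fps_X * AJ 3 15 (-1) (- m)))"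
    by (rule sum.cong[OF refl]) (simp only: dis1_a dis1_b dis1_c)
  also have "\<dots> = (\<Sum>m\<in>{-M..M}. AJ 9 9 (-1) m) - 2 * fps_X * (\<Sum>m\<in>{-M..M}. AJ 3 15 (-1) m)"
    by (rule sum_comb1)
  finally have 2: "(\<Sum>j\<in>{-(3*M+1)..3*M+1}. AJ 1 1 (-1) j)
      = (\<Sum>m\<in>{-M..M}. AJ 9 9 (-1) m) - 2 * fps_X * (\<Sum>m\<in>{-M..M}. AJ 3 15 (-1) m)" .
  have 3: "eqm n (theta 9 9 (-1)) (\<Sum>m\<in>{-M..M}. AJ 9 9 (-1) m)"
    using theta_trunc[of 9 9 n n "-1"] by (simp add: M_def)
  have 4: "eqm n (theta 3 15 (-1)) (\<Sum>m\<in>{-M..M}. AJ 3 15 (-1) m)"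
    using theta_trunc[of 3 15 n n "-1"] by (simp add: M_def)
  have "eqm n (theta 9 9 (-1) - 2 * fps_X * theta 3 15 (-1))
      ((\<Sum>m\<in>{-M..M}. AJ 9 9 (-1) m) - 2 * fps_X * (\<Sum>m\<in>{-M..M}. AJ 3 15 (-1) m))"
    by (rule eqm_diff[OF 3 eqm_mult_left[OF 4]])
  then show "eqm n (theta 1 1 (-1)) (theta 9 9 (-1) - 2 * fps_X * theta 3 15 (-1))"
    using 1 unfolding 2 by (simp add: eqm_iff)
qed

lemma trunc_extra:
  assumes "\<alpha> \<ge> 1" "\<beta> \<ge> 1" "int n \<le> 2 * M" "M \<ge> 0"
  shows "eqm n (theta \<alpha> \<beta> c) (\<Sum>k\<in>{-(2*M)..2*M+1}. AJ \<alpha> \<beta> c k)"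
proof -
  have e: "{-(2*M)..2*M+1} = insert (2*M+1) {-(2*M)..2*M}" using assms(4) by auto
  have "(\<Sum>k\<in>{-(2*M)..2*M+1}. AJ \<alpha> \<beta> c k) = AJ \<alpha> \<beta> c (2*M+1) + (\<Sum>k\<in>{-(2*M)..2*M}. AJ \<alpha> \<beta> c k)"
    unfolding e by (simp add: sum.insert)
  moreover have "eqm n (AJ \<alpha> \<beta> c (2*M+1)) 0"
    by (rule Aj_ja_small[OF assms(1,2)]) (use assms in linarith)
  moreover have "eqm n (theta \<alpha> \<beta> c) (\<Sum>k\<in>{-(2*M)..2*M}. AJ \<alpha> \<beta> c k)"
  proof -
    define N where "N = nat (2 * M)"
    have N: "int N = 2 * M" using assms(4) by (simp add: N_def)
    have "eqm n (theta \<alpha> \<beta> c) (\<Sum>k\<in>{- int N..int N}. AJ \<alpha> \<beta> c k)"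
      by (rule theta_trunc[OF assms(1,2)]) (use assms N in linarith)
    then show ?thesis unfolding N .
  qed
  ultimately show ?thesis using eqm_add[of n 0 "AJ \<alpha> \<beta> c (2*M+1)" "theta \<alpha> \<beta> c"]
    by (simp add: eqm_iff)
qed

theorem dissect2: "theta 1 3 1 = theta 3 6 1 + fps_X * theta 9 27 1"
proof (rule fps_eq_eqm)
  fix n :: nat
  define M where "M = int n"
  have M0: "M \<ge> 0" by (simp add: M_def)
  have e: "{- int (3 * n + 1)..int (3 * n + 1)} = {-(3*M+1)..3*M+1}" by (simp add: M_def)
  have 1: "eqm n (theta 1 3 1) (\<Sum>j\<in>{-(3*M+1)..3*M+1}. AJ 1 3 1 j)"
    using theta_trunc[of 1 3 n "3 * n + 1" 1] unfolding e by simp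
  have "(\<Sum>j\<in>{-(3*M+1)..3*M+1}. AJ 1 3 1 j)
      = (\<Sum>m\<in>{-M..M}. AJ 1 3 1 (3*m - 1) + AJ 1 3 1 (3*m) + AJ 1 3 1 (3*m + 1))"
    by (rule sum_mod3[OF M0])
  also have "\<dots> = (\<Sum>m\<in>{-M..M}. AJ 3 6 1 (2 * (- m) + 1) + AJ 3 6 1 (2 * m) + fps_X * AJ 9 27 1 (- m))"
    by (rule sum.cong[OF refl]) (simp only: dis2_d dis2_e dis2_f)
  also have "\<dots> = (\<Sum>k\<in>{-(2*M)..2*M+1}. AJ 3 6 1 k) + fps_X * (\<Sum>m\<in>{-M..M}. AJ 9 27 1 m)"
    by (rule sum_comb2[OF M0])
  finally have 2: "(\<Sum>j\<in>{-(3*M+1)..3*M+1}. AJ 1 3 1 j)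
      = (\<Sum>k\<in>{-(2*M)..2*M+1}. AJ 3 6 1 k) + fps_X * (\<Sum>m\<in>{-M..M}. AJ 9 27 1 m)" .
  have 3: "eqm n (theta 3 6 1) (\<Sum>k\<in>{-(2*M)..2*M+1}. AJ 3 6 1 k)"
    by (rule trunc_extra) (simp_all add: M_def)
  have 4: "eqm n (theta 9 27 1) (\<Sum>m\<in>{-M..M}. AJ 9 27 1 m)"
    using theta_trunc[of 9 27 n n 1] by (simp add: M_def)
  have "eqm n (theta 3 6 1 + fps_X * theta 9 27 1)
      ((\<Sum>k\<in>{-(2*M)..2*M+1}. AJ 3 6 1 k) + fps_X * (\<Sum>m\<in>{-M..M}. AJ 9 27 1 m))"
    by (rule eqm_add[OF 3 eqm_mult_left[OF 4]])
  then show "eqm n (theta 1 3 1) (theta 3 6 1 + fps_X * theta 9 27 1)"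
    using 1 unfolding 2 by (simp add: eqm_iff)
qed

definition part :: "nat \<Rightarrow> rat fps \<Rightarrow> rat fps" where
  "part r f = Abs_fps (\<lambda>n. if n mod 3 = r then f $ n else 0)"

definition sup3 :: "nat \<Rightarrow> rat fps \<Rightarrow> bool" where
  "sup3 r f \<longleftrightarrow> (\<forall>n. n mod 3 \<noteq> r \<longrightarrow> f $ n = 0)"

lemma part_sum: "f = part 0 f + part 1 f + part 2 f"
  by (rule fps_ext) (auto simp: part_def)

lemma sup3_part: "sup3 r (part r f)"
  by (simp add: sup3_def part_def)

lemma part_self: "sup3 r u \<Longrightarrow> part r u = u"
  by (rule fps_ext) (auto simp: sup3_def part_def)

lemma part_other: "sup3 r u \<Longrightarrow> r' \<noteq> r \<Longrightarrow> part r' u = 0"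
  by (rule fps_ext) (auto simp: sup3_def part_def)

lemma part_add: "part r (u + v) = part r u + part r v"
  by (rule fps_ext) (simp add: part_def)

lemma sup3_mult:
  assumes "sup3 i u" "sup3 j v"
  shows "sup3 ((i + j) mod 3) (u * v)"
  unfolding sup3_def
proof (intro allI impI)
  fix n assume n: "n mod 3 \<noteq> (i + j) mod 3"
  have "u $ k * v $ (n - k) = 0" if "k \<in> {0..n}" for k
  proof (cases "k mod 3 = i \<and> (n - k) mod 3 = j")
    case True
    then have "n mod 3 = (i + j) mod 3" using that by (metis atLeastAtMost_iff le_add_diff_inverse mod_add_eq)
    with n show ?thesis by simp
  next
    case False then show ?thesis using assms unfolding sup3_def by auto
  qed
  then show "(u * v) $ n = 0" unfolding fps_mult_nth by (intro sum.neutral) blast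
qed

lemma sup3_mod: "sup3 r u \<Longrightarrow> r < 3 \<Longrightarrow> sup3 (r mod 3) u" by simp

definition nrm :: "rat fps \<Rightarrow> rat fps" where
  "nrm f = part 0 f ^ 3 + part 1 f ^ 3 + part 2 f ^ 3 - 3 * part 0 f * part 1 f * part 2 f"

lemma norm_poly:
  fixes a0 a1 a2 b0 b1 b2 :: "'a::comm_ring_1"
  shows "(a0^3 + a1^3 + a2^3 - 3*a0*a1*a2) * (b0^3 + b1^3 + b2^3 - 3*b0*b1*b2)
    = (a0*b0 + a1*b2 + a2*b1)^3 + (a0*b1 + a1*b0 + a2*b2)^3 + (a0*b2 + a2*b0 + a1*b1)^3
      - 3 * (a0*b0 + a1*b2 + a2*b1) * (a0*b1 + a1*b0 + a2*b2) * (a0*b2 + a2*b0 + a1*b1)"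
  by (simp add: algebra_simps power3_eq_cube)

lemma sup3_add: "sup3 r u \<Longrightarrow> sup3 r v \<Longrightarrow> sup3 r (u + v)"
  by (simp add: sup3_def)

lemma sup3_0[simp]: "sup3 r 0" by (simp add: sup3_def)

lemma part_mult_general:
  fixes f g :: "rat fps"
  defines "a0 \<equiv> part 0 f" and "a1 \<equiv> part 1 f" and "a2 \<equiv> part 2 f"
      and "b0 \<equiv> part 0 g" and "b1 \<equiv> part 1 g" and "b2 \<equiv> part 2 g"
  shows "part 0 (f * g) = a0*b0 + a1*b2 + a2*b1"
    and "part 1 (f * g) = a0*b1 + a1*b0 + a2*b2"
    and "part 2 (f * g) = a0*b2 + a2*b0 + a1*b1"
proof -
  define C0 where "C0 = a0*b0 + a1*b2 + a2*b1"
  define C1 where "C1 = a0*b1 + a1*b0 + a2*b2"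
  define C2 where "C2 = a0*b2 + a2*b0 + a1*b1"
  have s: "sup3 0 a0" "sup3 1 a1" "sup3 2 a2" "sup3 0 b0" "sup3 1 b1" "sup3 2 b2"
    unfolding assms by (simp_all add: sup3_part)
  have fg: "f * g = C0 + C1 + C2"
  proof -
    have ef: "f = a0 + a1 + a2" unfolding assms by (rule part_sum)
    have eg: "g = b0 + b1 + b2" unfolding assms by (rule part_sum)
    show ?thesis unfolding C0_def C1_def C2_def by (subst ef, subst eg) (simp add: algebra_simps)
  qed
  have c0: "sup3 0 C0" unfolding C0_def
    using sup3_mult[OF s(1) s(4)] sup3_mult[OF s(2) s(6)] sup3_mult[OF s(3) s(5)]
    by (intro sup3_add) (simp_all add: numeral_2_eq_2)
  have c1: "sup3 1 C1" unfolding C1_def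
    using sup3_mult[OF s(1) s(5)] sup3_mult[OF s(2) s(4)] sup3_mult[OF s(3) s(6)]
    by (intro sup3_add) (simp_all add: numeral_2_eq_2)
  have c2: "sup3 2 C2" unfolding C2_def
    using sup3_mult[OF s(1) s(6)] sup3_mult[OF s(3) s(4)] sup3_mult[OF s(2) s(5)]
    by (intro sup3_add) (simp_all add: numeral_2_eq_2)
  have z: "part 0 C1 = 0" "part 0 C2 = 0" "part 1 C0 = 0" "part 1 C2 = 0" "part 2 C0 = 0" "part 2 C1 = 0"
    using part_other[OF c0] part_other[OF c1] part_other[OF c2] by simp_all
  show "part 0 (f * g) = a0*b0 + a1*b2 + a2*b1"
    unfolding fg part_add part_self[OF c0] z by (simp add: C0_def)
  show "part 1 (f * g) = a0*b1 + a1*b0 + a2*b2"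
    unfolding fg part_add part_self[OF c1] z by (simp add: C1_def)
  show "part 2 (f * g) = a0*b2 + a2*b0 + a1*b1"
    unfolding fg part_add part_self[OF c2] z by (simp add: C2_def)
qed

lemma nrm_mult: "nrm (f * g) = nrm f * nrm g"
  unfolding nrm_def part_mult_general by (rule norm_poly[symmetric])

lemma part_1: "part r 1 = (if r = 0 then 1 else 0)"
  by (rule fps_ext) (auto simp: part_def)

lemma nrm_1[simp]: "nrm 1 = 1"
  by (simp add: nrm_def part_1)

lemma nrm_prod: "nrm (\<Prod>k\<in>S. f k) = (\<Prod>k\<in>S. nrm (f k))"
  by (induction S rule: infinite_finite_induct) (simp_all add: nrm_mult)

lemma eqm_part: "eqm n f g \<Longrightarrow> eqm n (part r f) (part r g)"
  by (simp add: eqm_iff part_def)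

lemma eqm_nrm: "eqm n f g \<Longrightarrow> eqm n (nrm f) (nrm g)"
  unfolding nrm_def
  by (intro eqm_diff eqm_add eqm_power eqm_mult eqm_part eqm_refl) assumption+

lemma nrm_iprod:
  assumes g: "good f"
  shows "nrm (iprod f) = iprod (\<lambda>k. nrm (f k))"
proof -
  have g': "good (\<lambda>k. nrm (f k))"
    using g unfolding good_def by (metis eqm_nrm nrm_1)
  show ?thesis
  proof (rule sym, rule iprod_unique[OF g'])
    fix n
    have "eqm n (nrm (iprod f)) (nrm (\<Prod>k<n. f k))"
      by (rule eqm_nrm[OF iprod_eqm[OF g]]) simp
    then show "\<exists>N\<ge>n. eqm n (nrm (iprod f)) (\<Prod>k<N. nrm (f k))"
      unfolding nrm_prod by blast
  qed
qed

lemma part_1mX: "part r (1 - fps_X ^ m) = (if r = 0 then 1 else 0) - (if m mod 3 = r then fps_X ^ m else 0)"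
  by (rule fps_ext) (auto simp: part_def)

lemma nrm_1mX_nd: "m mod 3 \<noteq> 0 \<Longrightarrow> nrm (1 - fps_X ^ m) = 1 - fps_X ^ (3 * m)"
proof -
  assume m: "m mod 3 \<noteq> 0"
  then consider "m mod 3 = 1" | "m mod 3 = 2" by linarith
  then show ?thesis
  proof cases
    case 1 then show ?thesis
      unfolding nrm_def part_1mX by (simp add: power_mult[symmetric] mult.commute)
  next
    case 2 then show ?thesis
      unfolding nrm_def part_1mX by (simp add: power_mult[symmetric] mult.commute)
  qed
qed

lemma nrm_1mX_d: "m mod 3 = 0 \<Longrightarrow> nrm (1 - fps_X ^ m) = (1 - fps_X ^ m) ^ 3"
  unfolding nrm_def part_1mX by simp

lemma good_1mX: "(\<And>k. d k \<ge> Suc k) \<Longrightarrow> good (\<lambda>k. (1 - fps_X ^ d k :: rat fps))"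
  by (rule good_monom1)

lemma nrm_EE:
  assumes k: "k \<ge> 1" "k mod 3 \<noteq> 0"
  shows "nrm (EE k) * EE (9 * k) = EE (3 * k) ^ 4"
proof -
  have mk: "j \<le> k * j" for j using mult_le_mono1[OF k(1), of j] by simp
  have g: "good (\<lambda>i. 1 - fps_X ^ (k * Suc i) :: rat fps)"
  proof (rule good_1mX)
    fix j show "Suc j \<le> k * Suc j" using mult_le_mono1[of 1 "k" "Suc j"] k(1) by simp
  qed
  have gn: "good (\<lambda>i. nrm (1 - fps_X ^ (k * Suc i)))"
    using g unfolding good_def by (metis eqm_nrm nrm_1)
  define P1 where "P1 = iprod (\<lambda>j. 1 - fps_X ^ (3 * k + 9 * k * j) :: rat fps)"
  define P2 where "P2 = iprod (\<lambda>j. 1 - fps_X ^ (6 * k + 9 * k * j) :: rat fps)"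
  have g3: "good (\<lambda>j. 1 - fps_X ^ (3 * k * Suc j) :: rat fps)"
  proof (rule good_1mX)
    fix j show "Suc j \<le> 3 * k * Suc j" using mult_le_mono1[of 1 "3*k" "Suc j"] k(1) by simp
  qed
  have "nrm (EE k) = iprod (\<lambda>i. nrm (1 - fps_X ^ (k * Suc i)))"
    unfolding euler_Ek_iprod[OF k(1)] by (rule nrm_iprod[OF g])
  also have "\<dots> = (\<Prod>r<3. iprod (\<lambda>j. nrm (1 - fps_X ^ (k * Suc (3 * j + r)))))"
    by (rule iprod_split[OF gn]) simp
  also have "\<dots> = iprod (\<lambda>j. nrm (1 - fps_X ^ (k * Suc (3 * j))))
      * iprod (\<lambda>j. nrm (1 - fps_X ^ (k * Suc (3 * j + 1)))) * iprod (\<lambda>j. nrm (1 - fps_X ^ (k * Suc (3 * j + 2))))"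
    by (simp add: numeral_3_eq_3 numeral_2_eq_2 mult_ac)
  also have "(\<lambda>j. nrm (1 - fps_X ^ (k * Suc (3 * j)))) = (\<lambda>j. 1 - fps_X ^ (3 * k + 9 * k * j))"
  proof
    fix j
    have e: "k * Suc (3 * j) = k + 3 * (k * j)" by (simp add: algebra_simps)
    have "(k * Suc (3 * j)) mod 3 \<noteq> 0" using k(2) unfolding e by simp
    then show "nrm (1 - fps_X ^ (k * Suc (3 * j))) = 1 - fps_X ^ (3 * k + 9 * k * j)"
      by (simp add: nrm_1mX_nd algebra_simps)
  qed
  also have "(\<lambda>j. nrm (1 - fps_X ^ (k * Suc (3 * j + 1)))) = (\<lambda>j. 1 - fps_X ^ (6 * k + 9 * k * j))"
  proof
    fix j
    have e: "k * Suc (3 * j + 1) = 2 * k + 3 * (k * j)" by (simp add: algebra_simps)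
    have "(2 * k) mod 3 \<noteq> 0" using k(2) by presburger
    then have "(k * Suc (3 * j + 1)) mod 3 \<noteq> 0" unfolding e by simp
    then show "nrm (1 - fps_X ^ (k * Suc (3 * j + 1))) = 1 - fps_X ^ (6 * k + 9 * k * j)"
      by (simp add: nrm_1mX_nd algebra_simps)
  qed
  also have "(\<lambda>j. nrm (1 - fps_X ^ (k * Suc (3 * j + 2)))) = (\<lambda>j. (1 - fps_X ^ (3 * k * Suc j)) ^ 3)"
  proof
    fix j
    have e: "k * Suc (3 * j + 2) = 3 * k * Suc j" by (simp add: algebra_simps)
    show "nrm (1 - fps_X ^ (k * Suc (3 * j + 2))) = (1 - fps_X ^ (3 * k * Suc j)) ^ 3"
      unfolding e by (rule nrm_1mX_d) simp
  qed
  also have "iprod (\<lambda>j. (1 - fps_X ^ (3 * k * Suc j)) ^ 3) = EE (3 * k) ^ 3"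
    using iprod_power[OF g3, of 3] euler_Ek_iprod[of "3 * k"] k(1) by simp
  finally have n: "nrm (EE k) = P1 * P2 * EE (3 * k) ^ 3" unfolding P1_def P2_def .
  have g3': "good (\<lambda>i. 1 - fps_X ^ (3 * k * Suc i) :: rat fps)" by (rule g3)
  have "EE (3 * k) = iprod (\<lambda>i. 1 - fps_X ^ (3 * k * Suc i))"
    using euler_Ek_iprod[of "3 * k"] k(1) by simp
  also have "\<dots> = (\<Prod>r<3. iprod (\<lambda>j. 1 - fps_X ^ (3 * k * Suc (3 * j + r))))"
    by (rule iprod_split[OF g3']) simp
  also have "\<dots> = iprod (\<lambda>j. 1 - fps_X ^ (3 * k * Suc (3 * j)))
      * iprod (\<lambda>j. 1 - fps_X ^ (3 * k * Suc (3 * j + 1))) * iprod (\<lambda>j. 1 - fps_X ^ (3 * k * Suc (3 * j + 2)))"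
    by (simp add: numeral_3_eq_3 numeral_2_eq_2 mult_ac)
  also have "(\<lambda>j. 3 * k * Suc (3 * j)) = (\<lambda>j. 3 * k + 9 * k * j)" by (simp add: algebra_simps)
  also have "(\<lambda>j. 3 * k * Suc (3 * j + 1)) = (\<lambda>j. 6 * k + 9 * k * j)" by (simp add: algebra_simps)
  also have "(\<lambda>j. 3 * k * Suc (3 * j + 2)) = (\<lambda>j. 9 * k * Suc j)" by (simp add: algebra_simps)
  also have "iprod (\<lambda>j. 1 - fps_X ^ (9 * k * Suc j)) = EE (9 * k)"
    using euler_Ek_iprod[of "9 * k"] k(1) by simp
  finally have e3: "EE (3 * k) = P1 * P2 * EE (9 * k)" unfolding P1_def P2_def .
  have p4: "EE (3 * k) ^ 4 = EE (3 * k) ^ 3 * EE (3 * k)" by (simp add: power3_eq_cube power4_eq_xxxx)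
  show ?thesis unfolding n p4 by (subst (2) e3) (simp add: mult_ac)
qed

lemma sup3_X: "sup3 1 fps_X" by (simp add: sup3_def fps_X_def)

lemma nrm_AXB:
  assumes "sup3 0 A" "sup3 0 B"
  shows "nrm (A + fps_X * B) = A ^ 3 + fps_X ^ 3 * B ^ 3"
proof -
  have xb: "sup3 1 (fps_X * B)" using sup3_mult[OF sup3_X assms(2)] by simp
  have p0: "part 0 (A + fps_X * B) = A" unfolding part_add part_self[OF assms(1)] using part_other[OF xb, of 0] by simp
  have p1: "part 1 (A + fps_X * B) = fps_X * B" unfolding part_add part_self[OF xb] using part_other[OF assms(1), of 1] by simp
  have p2: "part 2 (A + fps_X * B) = 0" unfolding part_add using part_other[OF assms(1), of 2] part_other[OF xb, of 2] by simp
  show ?thesis unfolding nrm_def p0 p1 p2 by (simp add: power_mult_distrib)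
qed

lemma sup3_theta:
  assumes "3 dvd \<alpha>" "3 dvd \<beta>"
  shows "sup3 0 (theta \<alpha> \<beta> c)"
  unfolding sup3_def
proof (intro allI impI)
  fix n :: nat assume n: "n mod 3 \<noteq> 0"
  have "(AJ \<alpha> \<beta> c j) $ n = 0" for j
  proof -
    have "3 dvd expo \<alpha> \<beta> j" using assms unfolding expo_def by simp
    then have "n \<noteq> expo \<alpha> \<beta> j" using n by auto
    then show ?thesis unfolding AJ_eq by (simp add: fps_X_power_mult_right_nth)
  qed
  then show "theta \<alpha> \<beta> c $ n = 0" unfolding theta_def by (simp add: fps_sum_nth)
qed

lemma hx1: "(x::'a::comm_ring_1) ^ m * (c * x ^ k) = c * x ^ (m + k)" by (simp add: power_add mult_ac)
lemma hx2: "(x::'a::comm_ring_1) ^ m * (c * x) = c * x ^ (m + 1)" by (simp add: mult_ac)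

lemma poly5:
  fixes x :: "'a::comm_ring_1"
  shows "x ^ 10 * (9 - 8 * x) ^ 5 = 59049 * x ^ 10 - 262440 * x ^ 11 + 466560 * x ^ 12
           - 414720 * x ^ 13 + 184320 * x ^ 14 - 32768 * x ^ 15"
proof -
  have h: "(9 - 8 * x) ^ 5 = 59049 - 262440 * x + 466560 * x ^ 2 - 414720 * x ^ 3 + 184320 * x ^ 4 - 32768 * x ^ 5"
    by (simp add: power_numeral_reduce power2_eq_square algebra_simps)
  show ?thesis by (simp only: h distrib_left right_diff_distrib hx1 hx2) (simp add: mult.commute)
qed

lemma final_alg:
  fixes u3 u6 u9 u18 t a b n1 n2 d p :: "'a::field"
  assumes nz: "u3 \<noteq> 0" "u6 \<noteq> 0" "u9 \<noteq> 0" "u18 \<noteq> 0"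
    and R1: "(a ^ 3 - 8 * t * b ^ 3) * n2 = n1 ^ 2"
    and R2: "n1 * u9 = u3 ^ 4" and R3: "n2 * u18 = u6 ^ 4"
    and R4: "a * u18 = u9 ^ 2" and R5: "b * u6 * u9 = u3 * u18 ^ 2"
    and R6: "(d ^ 3 + t * p ^ 3) * n1 = n2 ^ 2"
    and R7: "d * u3 * u18 = u6 * u9 ^ 2" and R8: "p * u9 = u18 ^ 2"
  shows "(u3 ^ 5 * u6 ^ 5 * u18 ^ 5 / u9 ^ 15) ^ 6 = (u6 ^ 5 * u18 / (u3 * u9 ^ 5)) ^ 10 * (9 - 8 * (u6 ^ 5 * u18 / (u3 * u9 ^ 5))) ^ 5"
proof -
  define xi where "xi = u6 ^ 5 * u18 / (u3 * u9 ^ 5)"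
  define T where "T = t * u3 ^ 3 * u18 ^ 9 / (u6 ^ 3 * u9 ^ 9)"
  define Xq where "Xq = u3 ^ 8 * u18 ^ 4 / (u6 ^ 4 * u9 ^ 8)"
  have n1: "n1 = u3 ^ 4 / u9" using R2 nz by (simp add: field_simps)
  have n2: "n2 = u6 ^ 4 / u18" using R3 nz by (simp add: field_simps)
  have a: "a = u9 ^ 2 / u18" using R4 nz by (simp add: field_simps)
  have b: "b = u3 * u18 ^ 2 / (u6 * u9)" using R5 nz by (simp add: field_simps)
  have d: "d = u6 * u9 ^ 2 / (u3 * u18)" using R7 nz by (simp add: field_simps)
  have p: "p = u18 ^ 2 / u9" using R8 nz by (simp add: field_simps)
  define K where "K = u3 * u6 ^ 3 * u9 ^ 5 / u18 ^ 3"
  have K0: "K \<noteq> 0" using nz by (simp add: K_def)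
  have e1: "d ^ 3 * n1 = K" unfolding d n1 K_def using nz by (simp add: field_simps; (algebra)?)
  have e2: "t * p ^ 3 * n1 = K * T" unfolding p n1 K_def T_def using nz by (simp add: field_simps; (algebra)?)
  have e3: "n2 ^ 2 = K * xi" unfolding n2 K_def xi_def using nz by (simp add: field_simps; (algebra)?)
  have "K * (1 + T) = d ^ 3 * n1 + t * p ^ 3 * n1" using e1 e2 by (simp add: algebra_simps)
  also have "\<dots> = (d ^ 3 + t * p ^ 3) * n1" by (simp add: algebra_simps)
  also have "\<dots> = K * xi" using R6 e3 by simp
  finally have "K * (1 + T) = K * xi" .
  then have xiT: "xi = 1 + T" using K0 by simp
  define K' where "K' = u6 ^ 4 * u9 ^ 6 / u18 ^ 4"
  have K'0: "K' \<noteq> 0" using nz by (simp add: K'_def)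
  have f1: "a ^ 3 * n2 = K'" unfolding a n2 K'_def using nz by (simp add: field_simps; (algebra)?)
  have f2: "t * b ^ 3 * n2 = K' * T" unfolding b n2 K'_def T_def using nz by (simp add: field_simps; (algebra)?)
  have f3: "n1 ^ 2 = K' * Xq" unfolding n1 K'_def Xq_def using nz by (simp add: field_simps; (algebra)?)
  have "K' * (1 - 8 * T) = a ^ 3 * n2 - 8 * (t * b ^ 3 * n2)" using f1 f2 by (simp add: algebra_simps)
  also have "\<dots> = (a ^ 3 - 8 * t * b ^ 3) * n2" by (simp add: algebra_simps)
  also have "\<dots> = K' * Xq" using R1 f3 by simp
  finally have "K' * (1 - 8 * T) = K' * Xq" .
  then have XqT: "Xq = 1 - 8 * T" using K'0 by simp
  have "9 - 8 * xi = Xq" unfolding XqT xiT by simp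
  moreover have "(u3 ^ 5 * u6 ^ 5 * u18 ^ 5 / u9 ^ 15) ^ 6 = xi ^ 10 * Xq ^ 5"
    unfolding xi_def Xq_def using nz by (simp add: field_simps; (algebra)?)
  ultimately show ?thesis unfolding xi_def by simp
qed

lemma EE_0: "k \<ge> 1 \<Longrightarrow> EE k $ 0 = 1"
proof -
  assume k: "k \<ge> 1"
  have g: "good (\<lambda>i. 1 - fps_X ^ (k * Suc i) :: rat fps)"
  proof (rule good_1mX)
    fix j show "Suc j \<le> k * Suc j" using mult_le_mono1[of 1 "k" "Suc j"] k by simp
  qed
  have "eqm 1 (EE k) (\<Prod>i<1. 1 - fps_X ^ (k * Suc i))"
    unfolding euler_Ek_iprod[OF k] by (rule iprod_eqm[OF g]) simp
  then show ?thesis using k by (simp add: eqm_iff)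
qed

lemma nrm_sq: "nrm (f ^ 2) = nrm f ^ 2"
  by (simp add: power2_eq_square nrm_mult)

lemma sup3_negdouble: "sup3 0 B \<Longrightarrow> sup3 0 (- (B + B))"
  unfolding sup3_def fps_neg_nth fps_add_nth by simp

lemma g1: "(a::'a::comm_ring_1) - 2 * x * b = a + x * (- (b + b))"
  by (simp add: right_diff_distrib distrib_left mult_2 mult.commute mult.left_commute)
lemma g2: "(a::'a::comm_ring_1) ^ 3 + x * (- (b + b)) ^ 3 = a ^ 3 - 8 * x * b ^ 3"
proof -
  have "(- (b + b)) ^ 3 = - (8 * b ^ 3)" by (simp add: power3_eq_cube algebra_simps)
  then show ?thesis by simp
qed

lemma Id1:
  "(theta 9 9 (-1) ^ 3 - 8 * fps_X ^ 3 * theta 3 15 (-1) ^ 3) * nrm (EE 2) = nrm (EE 1) ^ 2"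
proof -
  let ?A = "theta 9 9 (-1)" and ?B = "theta 3 15 (-1)"
  have sA: "sup3 0 ?A" by (rule sup3_theta) simp_all
  have sB: "sup3 0 (- (?B + ?B))" by (rule sup3_negdouble, rule sup3_theta) simp_all
  have "theta 1 1 (-1) = ?A + fps_X * (- (?B + ?B))" unfolding dissect1 by (rule g1)
  then have "nrm (theta 1 1 (-1)) = ?A ^ 3 + fps_X ^ 3 * (- (?B + ?B)) ^ 3"
    using nrm_AXB[OF sA sB] by simp
  also have "\<dots> = ?A ^ 3 - 8 * fps_X ^ 3 * ?B ^ 3"
    by (rule g2)
  finally have n: "nrm (theta 1 1 (-1)) = ?A ^ 3 - 8 * fps_X ^ 3 * ?B ^ 3" .
  have "nrm (theta 1 1 (-1) * EE 2) = nrm (EE 1 ^ 2)" using inst1[of 1] by simp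
  then show ?thesis unfolding nrm_mult nrm_sq n .
qed

lemma Id2:
  "(theta 3 6 1 ^ 3 + fps_X ^ 3 * theta 9 27 1 ^ 3) * nrm (EE 1) = nrm (EE 2) ^ 2"
proof -
  let ?D = "theta 3 6 1" and ?P = "theta 9 27 1"
  have sD: "sup3 0 ?D" by (rule sup3_theta) simp_all
  have sP: "sup3 0 ?P" by (rule sup3_theta) simp_all
  have n: "nrm (theta 1 3 1) = ?D ^ 3 + fps_X ^ 3 * ?P ^ 3"
    unfolding dissect2 by (rule nrm_AXB[OF sD sP])
  have "nrm (theta 1 3 1 * EE 1) = nrm (EE 2 ^ 2)" using inst2[of 1] by simp
  then show ?thesis unfolding nrm_mult nrm_sq n .
qed

lemma N1: "nrm (EE 1) * EE 9 = EE 3 ^ 4" using nrm_EE[of 1] by simp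
lemma N2: "nrm (EE 2) * EE 18 = EE 6 ^ 4" using nrm_EE[of 2] by simp
lemma R4: "theta 9 9 (-1) * EE 18 = EE 9 ^ 2" using inst1[of 9] by simp
lemma R5: "theta 3 15 (-1) * EE 6 * EE 9 = EE 3 * EE 18 ^ 2" using inst3[of 3] by simp
lemma R7: "theta 3 6 1 * EE 3 * EE 18 = EE 6 * EE 9 ^ 2" using inst4[of 3] by simp
lemma R8: "theta 9 27 1 * EE 9 = EE 18 ^ 2" using inst2[of 9] by simp

lemma X3_0: "(fps_X ^ 3 :: rat fps) $ 0 = 0" by simp

lemma compose_div3:
  fixes x y :: "rat fps"
  assumes "y $ 0 \<noteq> 0"
  shows "(x / y) oo fps_X ^ 3 = (x oo fps_X ^ 3) / (y oo fps_X ^ 3)"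
proof -
  have "(x / y) oo fps_X ^ 3 = (x * inverse y) oo fps_X ^ 3" using assms by (simp add: fps_divide_unit)
  also have "\<dots> = (x oo fps_X ^ 3) * inverse (y oo fps_X ^ 3)"
    using assms by (simp add: fps_compose_mult_distrib[OF X3_0] fps_inverse_compose[OF X3_0])
  also have "\<dots> = (x oo fps_X ^ 3) / (y oo fps_X ^ 3)" using assms by (simp add: fps_divide_unit)
  finally show ?thesis .
qed

lemma F_div:
  fixes x y :: "rat fps"
  assumes "y $ 0 \<noteq> 0"
  shows "fps_to_fls (x / y) = fps_to_fls x / fps_to_fls y"
proof -
  have s: "subdegree y = 0" using assms by (simp add: subdegree_eq_0_iff)
  have "fps_to_fls (x / y) = fps_to_fls (x * inverse y)" using assms by (simp add: fps_divide_unit)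
  also have "\<dots> = fps_to_fls x * inverse (fps_to_fls y)"
    by (simp add: fls_times_fps_to_fls fls_inverse_fps_to_fls[OF s])
  finally show ?thesis by (simp add: divide_inverse)
qed

lemma EE_comp3: "k \<ge> 1 \<Longrightarrow> EE k oo fps_X ^ 3 = EE (3 * k)"
proof -
  assume k: "k \<ge> 1"
  have xk: "(fps_X ^ k :: rat fps) $ 0 = 0" using k by simp
  have "EE k oo fps_X ^ 3 = euler_E oo (fps_X ^ k oo fps_X ^ 3)"
    unfolding euler_Ek_def by (rule fps_compose_assoc[symmetric, OF X3_0 xk])
  also have "fps_X ^ k oo fps_X ^ 3 = (fps_X ^ (3 * k) :: rat fps)"
    by (simp add: fps_X_power_compose[OF X3_0] power_mult)
  finally show ?thesis unfolding euler_Ek_def .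
qed

lemmas Fsimps = fls_times_fps_to_fls fps_to_fls_power fps_to_fls_numeral fps_to_fls_minus fps_to_fls_plus

theorem theorem2p1:
  shows "gamma_fps ^ 6 = 59049 * xi_fps ^ 10 - 262440 * xi_fps ^ 11 + 466560 * xi_fps ^ 12
           - 414720 * xi_fps ^ 13 + 184320 * xi_fps ^ 14 - 32768 * xi_fps ^ 15"
proof -
  have e0: "EE 1 $ 0 = 1" "EE 2 $ 0 = 1" "EE 3 $ 0 = 1" "EE 6 $ 0 = 1" "EE 9 $ 0 = 1" "EE 18 $ 0 = 1"
    by (simp_all add: EE_0)
  have c: "EE 1 oo fps_X ^ 3 = EE 3" "EE (Suc 0) oo fps_X ^ 3 = EE 3" "EE 2 oo fps_X ^ 3 = EE 6" "EE 3 oo fps_X ^ 3 = EE 9" "EE 6 oo fps_X ^ 3 = EE 18"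
    using EE_comp3[of 1] EE_comp3[of 1] EE_comp3[of 2] EE_comp3[of 3] EE_comp3[of 6] by simp_all
  have G3: "gamma_fps oo fps_X ^ 3 = EE 3 ^ 5 * EE 6 ^ 5 * EE 18 ^ 5 / EE 9 ^ 15"
  proof -
    have "(EE 3 ^ 15) $ 0 \<noteq> 0" using e0 by (simp add: fps_nth_power_0)
    then show ?thesis unfolding gamma_fps_def
      by (simp add: compose_div3 fps_compose_mult_distrib[OF X3_0] fps_compose_power[OF X3_0, symmetric] c)
  qed
  have Z3: "xi_fps oo fps_X ^ 3 = EE 6 ^ 5 * EE 18 / (EE 3 * EE 9 ^ 5)"
  proof -
    have "(EE 1 * EE 3 ^ 5) $ 0 \<noteq> 0" using e0 by (simp add: fps_nth_power_0)
    then show ?thesis unfolding xi_fps_def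
      by (simp add: compose_div3 fps_compose_mult_distrib[OF X3_0] fps_compose_power[OF X3_0, symmetric] c)
  qed
  define u3 where "u3 = fps_to_fls (EE 3)"
  define u6 where "u6 = fps_to_fls (EE 6)"
  define u9 where "u9 = fps_to_fls (EE 9)"
  define u18 where "u18 = fps_to_fls (EE 18)"
  have nz: "u3 \<noteq> 0" "u6 \<noteq> 0" "u9 \<noteq> 0" "u18 \<noteq> 0"
    unfolding u3_def u6_def u9_def u18_def using e0 by (auto simp: fps_to_fls_eq_0_iff dest: arg_cong[of _ _ "\<lambda>f. f $ 0"])
  have FG: "fps_to_fls (gamma_fps oo fps_X ^ 3) = u3 ^ 5 * u6 ^ 5 * u18 ^ 5 / u9 ^ 15"
  proof -
    have "(EE 9 ^ 15) $ 0 \<noteq> 0" using e0 by (simp add: fps_nth_power_0)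
    then show ?thesis unfolding G3 u3_def u6_def u9_def u18_def by (simp add: F_div Fsimps)
  qed
  have FZ: "fps_to_fls (xi_fps oo fps_X ^ 3) = u6 ^ 5 * u18 / (u3 * u9 ^ 5)"
  proof -
    have "(EE 3 * EE 9 ^ 5) $ 0 \<noteq> 0" using e0 by (simp add: fps_nth_power_0)
    then show ?thesis unfolding Z3 u3_def u6_def u9_def u18_def by (simp add: F_div Fsimps)
  qed
  define t where "t = fps_to_fls (fps_X ^ 3 :: rat fps)"
  define a where "a = fps_to_fls (theta 9 9 (-1))"
  define b where "b = fps_to_fls (theta 3 15 (-1))"
  define n1 where "n1 = fps_to_fls (nrm (EE 1))"
  define n2 where "n2 = fps_to_fls (nrm (EE 2))"
  define d where "d = fps_to_fls (theta 3 6 1)"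
  define p where "p = fps_to_fls (theta 9 27 1)"
  have R1: "(a ^ 3 - 8 * t * b ^ 3) * n2 = n1 ^ 2"
    using arg_cong[OF Id1, of fps_to_fls] unfolding a_def b_def t_def n1_def n2_def by (simp add: Fsimps)
  have R2: "n1 * u9 = u3 ^ 4" using arg_cong[OF N1, of fps_to_fls] unfolding n1_def u9_def u3_def by (simp add: Fsimps)
  have R3: "n2 * u18 = u6 ^ 4" using arg_cong[OF N2, of fps_to_fls] unfolding n2_def u18_def u6_def by (simp add: Fsimps)
  have R4': "a * u18 = u9 ^ 2" using arg_cong[OF R4, of fps_to_fls] unfolding a_def u18_def u9_def by (simp add: Fsimps)
  have R5': "b * u6 * u9 = u3 * u18 ^ 2" using arg_cong[OF R5, of fps_to_fls] unfolding b_def u6_def u9_def u3_def u18_def by (simp add: Fsimps)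
  have R6: "(d ^ 3 + t * p ^ 3) * n1 = n2 ^ 2"
    using arg_cong[OF Id2, of fps_to_fls] unfolding d_def p_def t_def n1_def n2_def by (simp add: Fsimps)
  have R7': "d * u3 * u18 = u6 * u9 ^ 2" using arg_cong[OF R7, of fps_to_fls] unfolding d_def u3_def u18_def u6_def u9_def by (simp add: Fsimps)
  have R8': "p * u9 = u18 ^ 2" using arg_cong[OF R8, of fps_to_fls] unfolding p_def u9_def u18_def by (simp add: Fsimps)
  have alg: "(u3 ^ 5 * u6 ^ 5 * u18 ^ 5 / u9 ^ 15) ^ 6 = (u6 ^ 5 * u18 / (u3 * u9 ^ 5)) ^ 10 * (9 - 8 * (u6 ^ 5 * u18 / (u3 * u9 ^ 5))) ^ 5"
    by (rule final_alg[OF nz R1 R2 R3 R4' R5' R6 R7' R8'])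
  define G where "G = gamma_fps oo fps_X ^ 3"
  define Z where "Z = xi_fps oo fps_X ^ 3"
  have "fps_to_fls (G ^ 6) = fps_to_fls (59049 * Z ^ 10 - 262440 * Z ^ 11 + 466560 * Z ^ 12
           - 414720 * Z ^ 13 + 184320 * Z ^ 14 - 32768 * Z ^ 15)"
    unfolding Fsimps FG[folded G_def] FZ[folded Z_def] using alg unfolding poly5 by simp
  then have GZ: "G ^ 6 = 59049 * Z ^ 10 - 262440 * Z ^ 11 + 466560 * Z ^ 12
           - 414720 * Z ^ 13 + 184320 * Z ^ 14 - 32768 * Z ^ 15" by (simp only: fps_to_fls_eq_iff)
  have "(gamma_fps ^ 6 - (59049 * xi_fps ^ 10 - 262440 * xi_fps ^ 11 + 466560 * xi_fps ^ 12
           - 414720 * xi_fps ^ 13 + 184320 * xi_fps ^ 14 - 32768 * xi_fps ^ 15)) oo fps_X ^ 3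
        = G ^ 6 - (59049 * Z ^ 10 - 262440 * Z ^ 11 + 466560 * Z ^ 12
           - 414720 * Z ^ 13 + 184320 * Z ^ 14 - 32768 * Z ^ 15)"
    unfolding G_def Z_def
    by (simp add: fps_compose_sub_distrib fps_compose_add_distrib fps_compose_mult_distrib[OF X3_0]
        fps_compose_power[OF X3_0, symmetric])
  also have "\<dots> = 0" using GZ by simp
  finally have "(gamma_fps ^ 6 - (59049 * xi_fps ^ 10 - 262440 * xi_fps ^ 11 + 466560 * xi_fps ^ 12
           - 414720 * xi_fps ^ 13 + 184320 * xi_fps ^ 14 - 32768 * xi_fps ^ 15)) oo fps_X ^ 3 = 0" .
  then show ?thesis using fps_compose_eq_0_iff[OF X3_0] by simp
qed

end
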